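(* Let $(\Delta,\delta)$ be a building of type $(W,S)$ and let $G$ be a group acting on $\Delta$ by type-preserving automorphisms such that the action is Weyl-transitive. Let $a$ and $b$ be two simplices with residues $\mathcal{A}$ and $\mathcal{B}$ respectively. Then: (1) the stabilizer $G_b$ acts transitively on the set of simplices of the same type as $a$ whose residues $\mathcal{R}$ satisfy $\min\delta(\mathcal{B},\mathcal{R})=\min\delta(\mathcal{B},\mathcal{A})$; (2) the subgroup $G_a\cap G_b$ acts transitively on $\operatorname{proj}_{\mathcal{A}}(\mathcal{B})$, on $\operatorname{proj}_{\mathcal{B}}(\mathcal{A})$, and on the set of ordered pairs $(x,y)\in\operatorname{proj}_{\mathcal{A}}(\mathcal{B})\times\operatorname{proj}_{\mathcal{B}}(\mathcal{A})$ with $\delta(x,y)=\min\delta(\mathcal{A},\mathcal{B})$.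
   Context: A building of type $(W,S)$ ($S$ finite, $\ell$ the length function) is a set $\Delta$ of chambers with a Weyl distance $\delta:\Delta\times\Delta\to W$ satisfying the standard axioms. For $J\subseteq S$ let $W_J=\langle J\rangle$; $J$ is spherical if $W_J$ is finite. The $J$-residue of a chamber $x$ is $R_J(x)=\{y\in\Delta:\delta(x,y)\in W_J\}$. The building is viewed as a simplicial complex whose simplices are the spherical residues (ordered by reverse inclusion; chambers are the maximal simplices); the simplex corresponding to a residue of type $J$ has cotype $J$, and simplices have the same type iff they have the same cotype. An automorphism is type-preserving if $\delta(gx,gy)=\delta(x,y)$ for all chambers $x,y$. A group $G$ of such automorphisms is Weyl-transitive if for all chambers $x,y,x',y'$ with $\delta(x,y)=\delta(x',y')$ there is $g\in G$ with $g.x=x'$, $g.y=y'$. $G_b$ denotes the stabilizer of the simplex $b$. For a residue $\mathcal{R}$ and a chamber $x$, $\operatorname{proj}_{\mathcal{R}}(x)$ is the unique chamber of $\mathcal{R}$ at minimal gallery distance from $x$; for residues $\mathcal{A},\mathcal{B}$, $\operatorname{proj}_{\mathcal{B}}(\mathcal{A})=\{\operatorname{proj}_{\mathcal{B}}(x):x\in\mathcal{A}\}$. The set $\delta(\mathcal{A},\mathcal{B})=\{\delta(x,y):x\in\mathcal{A},y\in\mathcal{B}\}$ has a unique element of minimal length, denoted $\min\delta(\mathcal{A},\mathcal{B})$. *)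

theory Defs
  imports "HOL-Algebra.Algebra"
begin

definition word_prod :: "('w, 'm) monoid_scheme \<Rightarrow> 'w list \<Rightarrow> 'w" where
  "word_prod W ws = foldr (\<lambda>s w. s \<otimes>\<^bsub>W\<^esub> w) ws \<one>\<^bsub>W\<^esub>"

definition wlen :: "('w, 'm) monoid_scheme \<Rightarrow> 'w set \<Rightarrow> 'w \<Rightarrow> nat" where
  "wlen W S w = (LEAST n. \<exists>ws. length ws = n \<and> set ws \<subseteq> S \<and> word_prod W ws = w)"

text \<open>Coxeter system, via the (Matsumoto) exchange-condition characterisation.\<close>
definition coxeter_system :: "('w, 'm) monoid_scheme \<Rightarrow> 'w set \<Rightarrow> bool" where
  "coxeter_system W S \<longleftrightarrow> group W \<and> finite S \<and> S \<subseteq> carrier W \<and> \<one>\<^bsub>W\<^esub> \<notin> S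
    \<and> (\<forall>s\<in>S. s \<otimes>\<^bsub>W\<^esub> s = \<one>\<^bsub>W\<^esub>)
    \<and> generate W S = carrier W
    \<and> (\<forall>s\<in>S. \<forall>ws. set ws \<subseteq> S \<longrightarrow> length ws = wlen W S (word_prod W ws)
          \<longrightarrow> wlen W S (s \<otimes>\<^bsub>W\<^esub> word_prod W ws) \<le> wlen W S (word_prod W ws)
          \<longrightarrow> (\<exists>i<length ws. s \<otimes>\<^bsub>W\<^esub> word_prod W ws = word_prod W (take i ws @ drop (Suc i) ws)))"

definition building :: "('w, 'm) monoid_scheme \<Rightarrow> 'w set \<Rightarrow> 'c set \<Rightarrow> ('c \<Rightarrow> 'c \<Rightarrow> 'w) \<Rightarrow> bool" where
  "building W S \<Delta> \<delta> \<longleftrightarrow> coxeter_system W S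
    \<and> (\<forall>x\<in>\<Delta>. \<forall>y\<in>\<Delta>. \<delta> x y \<in> carrier W)
    \<and> (\<forall>x\<in>\<Delta>. \<forall>y\<in>\<Delta>. \<delta> x y = \<one>\<^bsub>W\<^esub> \<longleftrightarrow> x = y)
    \<and> (\<forall>x\<in>\<Delta>. \<forall>y\<in>\<Delta>. \<forall>x'\<in>\<Delta>. \<forall>s\<in>S. \<delta> x' x = s \<longrightarrow>
          (\<delta> x' y = s \<otimes>\<^bsub>W\<^esub> \<delta> x y \<or> \<delta> x' y = \<delta> x y)
          \<and> (wlen W S (s \<otimes>\<^bsub>W\<^esub> \<delta> x y) = wlen W S (\<delta> x y) + 1
               \<longrightarrow> \<delta> x' y = s \<otimes>\<^bsub>W\<^esub> \<delta> x y))
    \<and> (\<forall>x\<in>\<Delta>. \<forall>y\<in>\<Delta>. \<forall>s\<in>S. \<exists>x'\<in>\<Delta>. \<delta> x' x = s \<and> \<delta> x' y = s \<otimes>\<^bsub>W\<^esub> \<delta> x y)"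

definition residue :: "('w, 'm) monoid_scheme \<Rightarrow> 'c set \<Rightarrow> ('c \<Rightarrow> 'c \<Rightarrow> 'w) \<Rightarrow> 'w set \<Rightarrow> 'c \<Rightarrow> 'c set" where
  "residue W \<Delta> \<delta> J x = {y \<in> \<Delta>. \<delta> x y \<in> generate W J}"

text \<open>A simplex of cotype J, identified with its (spherical) residue of type J.\<close>
definition simplex_of_type :: "('w, 'm) monoid_scheme \<Rightarrow> 'w set \<Rightarrow> 'c set \<Rightarrow> ('c \<Rightarrow> 'c \<Rightarrow> 'w)
    \<Rightarrow> 'w set \<Rightarrow> 'c set \<Rightarrow> bool" where
  "simplex_of_type W S \<Delta> \<delta> J R \<longleftrightarrow> J \<subseteq> S \<and> finite (generate W J) \<and> (\<exists>x\<in>\<Delta>. R = residue W \<Delta> \<delta> J x)"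

definition gdist :: "'w set \<Rightarrow> 'c set \<Rightarrow> ('c \<Rightarrow> 'c \<Rightarrow> 'w) \<Rightarrow> 'c \<Rightarrow> 'c \<Rightarrow> nat" where
  "gdist S \<Delta> \<delta> x y = (LEAST n. \<exists>xs. length xs = Suc n \<and> hd xs = x \<and> last xs = y \<and> set xs \<subseteq> \<Delta>
       \<and> (\<forall>i<n. \<delta> (xs ! i) (xs ! Suc i) \<in> S))"

definition proj :: "'w set \<Rightarrow> 'c set \<Rightarrow> ('c \<Rightarrow> 'c \<Rightarrow> 'w) \<Rightarrow> 'c set \<Rightarrow> 'c \<Rightarrow> 'c" where
  "proj S \<Delta> \<delta> R x = (THE y. y \<in> R \<and> (\<forall>z\<in>R. gdist S \<Delta> \<delta> x y \<le> gdist S \<Delta> \<delta> x z))"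

definition proj_set :: "'w set \<Rightarrow> 'c set \<Rightarrow> ('c \<Rightarrow> 'c \<Rightarrow> 'w) \<Rightarrow> 'c set \<Rightarrow> 'c set \<Rightarrow> 'c set" where
  "proj_set S \<Delta> \<delta> B A = proj S \<Delta> \<delta> B ` A"

definition min_delta :: "('w, 'm) monoid_scheme \<Rightarrow> 'w set \<Rightarrow> ('c \<Rightarrow> 'c \<Rightarrow> 'w) \<Rightarrow> 'c set \<Rightarrow> 'c set \<Rightarrow> 'w" where
  "min_delta W S \<delta> A B = (THE w. w \<in> {\<delta> x y |x y. x \<in> A \<and> y \<in> B}
      \<and> (\<forall>v\<in>{\<delta> x y |x y. x \<in> A \<and> y \<in> B}. wlen W S w \<le> wlen W S v))"

definition type_preserving :: "('g, 'n) monoid_scheme \<Rightarrow> 'c set \<Rightarrow> ('c \<Rightarrow> 'c \<Rightarrow> 'w) \<Rightarrow> ('g \<Rightarrow> 'c \<Rightarrow> 'c) \<Rightarrow> bool" where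
  "type_preserving G \<Delta> \<delta> \<phi> \<longleftrightarrow> (\<forall>g\<in>carrier G. \<forall>x\<in>\<Delta>. \<forall>y\<in>\<Delta>. \<delta> (\<phi> g x) (\<phi> g y) = \<delta> x y)"

definition weyl_transitive :: "('g, 'n) monoid_scheme \<Rightarrow> 'c set \<Rightarrow> ('c \<Rightarrow> 'c \<Rightarrow> 'w) \<Rightarrow> ('g \<Rightarrow> 'c \<Rightarrow> 'c) \<Rightarrow> bool" where
  "weyl_transitive G \<Delta> \<delta> \<phi> \<longleftrightarrow> (\<forall>x\<in>\<Delta>. \<forall>y\<in>\<Delta>. \<forall>x'\<in>\<Delta>. \<forall>y'\<in>\<Delta>.
      \<delta> x y = \<delta> x' y' \<longrightarrow> (\<exists>g\<in>carrier G. \<phi> g x = x' \<and> \<phi> g y = y'))"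

definition simplex_stab :: "('g, 'n) monoid_scheme \<Rightarrow> ('g \<Rightarrow> 'c \<Rightarrow> 'c) \<Rightarrow> 'c set \<Rightarrow> 'g set" where
  "simplex_stab G \<phi> R = {g \<in> carrier G. \<phi> g ` R = R}"

definition acts_transitively_on :: "'g set \<Rightarrow> ('g \<Rightarrow> 'x \<Rightarrow> 'x) \<Rightarrow> 'x set \<Rightarrow> bool" where
  "acts_transitively_on Hs f Xs \<longleftrightarrow> (\<forall>h\<in>Hs. \<forall>u\<in>Xs. f h u \<in> Xs) \<and> (\<forall>u\<in>Xs. \<forall>v\<in>Xs. \<exists>h\<in>Hs. f h u = v)"

end

theory Submission
  imports Defs
begin

locale cox = group W for W :: "('w, 'm) monoid_scheme" (structure) +
  fixes S :: "'w set"
  assumes cs: "coxeter_system W S"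
begin

abbreviation "l \<equiv> wlen W S"
abbreviation "wp \<equiv> word_prod W"
abbreviation "red ws \<equiv> set ws \<subseteq> S \<and> length ws = l (wp ws)"

lemma S_carr: "S \<subseteq> carrier W" and one_nS: "\<one> \<notin> S" and ss: "s \<in> S \<Longrightarrow> s \<otimes> s = \<one>"
  and genS: "generate W S = carrier W"
  using cs unfolding coxeter_system_def by auto

lemma exch0: "s \<in> S \<Longrightarrow> set ws \<subseteq> S \<Longrightarrow> length ws = l (wp ws) \<Longrightarrow> l (s \<otimes> wp ws) \<le> l (wp ws)
  \<Longrightarrow> \<exists>i<length ws. s \<otimes> wp ws = wp (take i ws @ drop (Suc i) ws)"
  using cs unfolding coxeter_system_def by blast

lemma sC: "s \<in> S \<Longrightarrow> s \<in> carrier W" using S_carr by auto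

lemma inv_s: "s \<in> S \<Longrightarrow> inv s = s"
  using ss sC by (simp add: inv_equality)

lemma wp_Nil[simp]: "wp [] = \<one>" by (simp add: word_prod_def)
lemma wp_Cons[simp]: "wp (s # ws) = s \<otimes> wp ws" by (simp add: word_prod_def)

lemma wp_closed: "set ws \<subseteq> S \<Longrightarrow> wp ws \<in> carrier W"
  by (induct ws) (auto intro: sC)

lemma wp_append: "set ws \<subseteq> S \<Longrightarrow> set vs \<subseteq> S \<Longrightarrow> wp (ws @ vs) = wp ws \<otimes> wp vs"
  by (induct ws) (auto simp: m_assoc wp_closed sC)

lemma wp_gen: "J \<subseteq> S \<Longrightarrow> set ws \<subseteq> J \<Longrightarrow> wp ws \<in> generate W J"
proof (induct ws)
  case Nil then show ?case by (simp add: generate.one)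
next
  case (Cons a ws)
  then show ?case by (simp add: generate.eng generate.incl)
qed

lemma gen_word: assumes "J \<subseteq> S" "x \<in> generate W J" shows "\<exists>ws. set ws \<subseteq> J \<and> wp ws = x"
  using assms(2)
proof (induct x rule: generate.induct)
  case one then show ?case by (rule exI[of _ "[]"]) simp
next
  case (incl h) then show ?case using assms sC[of h] by (intro exI[of _ "[h]"]) auto
next
  case (inv h) then show ?case using assms sC[of h] inv_s[of h] by (intro exI[of _ "[h]"]) auto
next
  case (eng h1 h2)
  then obtain ws vs where "set ws \<subseteq> J" "wp ws = h1" "set vs \<subseteq> J" "wp vs = h2" by blast
  then show ?case using assms by (intro exI[of _ "ws @ vs"]) (auto simp: wp_append)
qed

lemma word_ex: "w \<in> carrier W \<Longrightarrow> \<exists>ws. set ws \<subseteq> S \<and> wp ws = w"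
  using gen_word[of S w] genS by auto

lemma l_word: assumes "w \<in> carrier W" shows "\<exists>ws. length ws = l w \<and> set ws \<subseteq> S \<and> wp ws = w"
proof -
  obtain ws where "set ws \<subseteq> S" "wp ws = w" using word_ex assms by blast
  then have "\<exists>n ws. length ws = n \<and> set ws \<subseteq> S \<and> wp ws = w" by blast
  then show ?thesis unfolding wlen_def by (rule LeastI_ex)
qed

lemma l_le: "set ws \<subseteq> S \<Longrightarrow> l (wp ws) \<le> length ws"
  unfolding wlen_def by (rule Least_le) blast

lemma wp_rev: "set ws \<subseteq> S \<Longrightarrow> wp (rev ws) = inv (wp ws)"
proof (induct ws)
  case Nil then show ?case by simp
next
  case (Cons a ws)
  then show ?case by (simp add: wp_append inv_mult_group wp_closed sC inv_s)
qed

lemma l_inv_le: "w \<in> carrier W \<Longrightarrow> l (inv w) \<le> l w"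
  by (metis l_word l_le length_rev set_rev wp_rev)

lemma l_inv[simp]: "w \<in> carrier W \<Longrightarrow> l (inv w) = l w"
  by (metis l_inv_le inv_inv inv_closed le_antisym)

lemma l_mult: "a \<in> carrier W \<Longrightarrow> b \<in> carrier W \<Longrightarrow> l (a \<otimes> b) \<le> l a + l b"
proof -
  assume "a \<in> carrier W" "b \<in> carrier W"
  then obtain as bs where "length as = l a" "set as \<subseteq> S" "wp as = a" "length bs = l b" "set bs \<subseteq> S" "wp bs = b"
    using l_word by metis
  then show ?thesis using l_le[of "as @ bs"] wp_append[of as bs] by auto
qed

lemma l_zero: "w \<in> carrier W \<Longrightarrow> l w = 0 \<longleftrightarrow> w = \<one>"
proof
  assume "w \<in> carrier W" "l w = 0"
  then show "w = \<one>" using l_word by fastforce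
next
  assume "w = \<one>" then show "l w = 0" using l_le[of "[]"] by simp
qed

lemma l_S: "s \<in> S \<Longrightarrow> l s = 1"
  using l_le[of "[s]"] l_zero[of s] one_nS sC[of s] by fastforce

lemma red_split: "red (as @ bs) \<Longrightarrow> red as \<and> red bs"
proof -
  assume r: "red (as @ bs)"
  then have c: "set as \<subseteq> S" "set bs \<subseteq> S" by auto
  have "l (wp (as @ bs)) \<le> l (wp as) + l (wp bs)"
    using c by (simp add: wp_append l_mult wp_closed)
  moreover have "l (wp as) \<le> length as" "l (wp bs) \<le> length bs" using c l_le by auto
  ultimately show ?thesis using r c by auto
qed

lemma exch: assumes "s \<in> S" "red ws" "l (s \<otimes> wp ws) \<le> l (wp ws)"
  shows "\<exists>as z bs. ws = as @ z # bs \<and> s \<otimes> wp ws = wp (as @ bs)"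
proof -
  obtain i where i: "i < length ws" "s \<otimes> wp ws = wp (take i ws @ drop (Suc i) ws)"
    using exch0 assms by blast
  then have "ws = take i ws @ ws ! i # drop (Suc i) ws" by (simp add: id_take_nth_drop)
  then show ?thesis using i by blast
qed

lemma exch_r: assumes "s \<in> S" "red ws" "l (wp ws \<otimes> s) \<le> l (wp ws)"
  shows "\<exists>as z bs. ws = as @ z # bs \<and> wp ws \<otimes> s = wp (as @ bs)"
proof -
  have c: "wp ws \<in> carrier W" "s \<in> carrier W" using assms wp_closed sC by auto
  have r: "red (rev ws)" using assms wp_rev[of ws] c by simp
  have "s \<otimes> wp (rev ws) = inv (wp ws \<otimes> s)"
    using assms c by (simp add: wp_rev inv_mult_group inv_s)
  then have "l (s \<otimes> wp (rev ws)) \<le> l (wp (rev ws))" using assms c wp_rev by simp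
  then obtain as z bs where e: "rev ws = as @ z # bs" "s \<otimes> wp (rev ws) = wp (as @ bs)"
    using exch[OF assms(1) r] by blast
  have ws: "ws = rev bs @ z # rev as" using e(1) by (metis rev_append rev_rev_ident rev.simps(2) append_assoc append_Cons append_Nil)
  have sets: "set as \<subseteq> S" "set bs \<subseteq> S" using assms ws by auto
  have "wp ws \<otimes> s = inv (s \<otimes> wp (rev ws))"
    using assms c by (simp add: wp_rev inv_mult_group inv_s)
  also have "\<dots> = wp (rev (as @ bs))" using e sets wp_rev[of "as @ bs"] by simp
  also have "\<dots> = wp (rev bs @ rev as)" by simp
  finally show ?thesis using ws by blast
qed

lemma l_Smult: "s \<in> S \<Longrightarrow> w \<in> carrier W \<Longrightarrow> l (s \<otimes> w) \<le> l w + 1"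
  using l_mult[of s w] l_S sC by simp

lemma l_multS: "s \<in> S \<Longrightarrow> w \<in> carrier W \<Longrightarrow> l (w \<otimes> s) \<le> l w + 1"
  using l_mult[of w s] l_S sC by simp

lemma deletion: "set ws \<subseteq> S \<Longrightarrow> l (wp ws) < length ws \<Longrightarrow>
   \<exists>ws'. set ws' \<subseteq> set ws \<and> length ws' < length ws \<and> wp ws' = wp ws"
proof (induct ws)
  case Nil then show ?case by simp
next
  case (Cons s ws)
  show ?case
  proof (cases "l (wp ws) < length ws")
    case True
    then obtain ws' where "set ws' \<subseteq> set ws" "length ws' < length ws" "wp ws' = wp ws"
      using Cons by auto
    then show ?thesis by (intro exI[of _ "s # ws'"]) auto
  next
    case False
    then have r: "red ws" using l_le Cons by fastforce
    have "l (s \<otimes> wp ws) \<le> l (wp ws)" using Cons r by simp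
    then obtain as z bs where "ws = as @ z # bs" "s \<otimes> wp ws = wp (as @ bs)"
      using exch[of s ws] Cons r by auto
    then show ?thesis by (intro exI[of _ "as @ bs"]) auto
  qed
qed

lemma red_word: assumes "J \<subseteq> S" "u \<in> generate W J"
  shows "\<exists>ws. set ws \<subseteq> J \<and> wp ws = u \<and> length ws = l u"
proof -
  let ?P = "\<lambda>n. \<exists>ws. length ws = n \<and> set ws \<subseteq> J \<and> wp ws = u"
  obtain ws0 where "set ws0 \<subseteq> J" "wp ws0 = u" using gen_word assms by blast
  then have ex: "?P (length ws0)" by blast
  obtain ws where ws: "length ws = (LEAST n. ?P n)" "set ws \<subseteq> J" "wp ws = u"
    using LeastI_ex[of ?P] ex by blast
  have "l u \<le> length ws" using l_le[of ws] ws assms by auto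
  moreover have "\<not> l u < length ws"
  proof
    assume "l u < length ws"
    then obtain ws' where "set ws' \<subseteq> set ws" "length ws' < length ws" "wp ws' = wp ws"
      using deletion[of ws] ws assms by auto
    then have "?P (length ws')" using ws by auto
    then have "(LEAST n. ?P n) \<le> length ws'" by (rule Least_le)
    then show False using ws \<open>length ws' < length ws\<close> by simp
  qed
  ultimately show ?thesis using ws by auto
qed

lemma split3: "ws @ us = as @ z # bs \<Longrightarrow>
   (\<exists>c d. us = c @ z # d \<and> as = ws @ c \<and> bs = d) \<or> (\<exists>a c. ws = a @ z # c \<and> as = a \<and> bs = c @ us)"
proof -
  assume h: "ws @ us = as @ z # bs"
  then obtain m where "ws = as @ m \<and> m @ us = z # bs \<or> ws @ m = as \<and> us = m @ z # bs"
    by (auto simp: append_eq_append_conv2)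
  then show ?thesis
  proof
    assume a: "ws = as @ m \<and> m @ us = z # bs"
    show ?thesis
    proof (cases m)
      case Nil then show ?thesis using a by auto
    next
      case (Cons y ys) then show ?thesis using a by auto
    qed
  qed auto
qed

lemma gen_carr: "J \<subseteq> S \<Longrightarrow> generate W J \<subseteq> carrier W"
  using generate_incl S_carr by blast

lemma gen_sub: "J \<subseteq> S \<Longrightarrow> subgroup (generate W J) W"
  using generate_is_subgroup S_carr by blast

lemma C4_word:
  assumes J: "J \<subseteq> S" and w: "w \<in> carrier W" and mn: "\<forall>u\<in>generate W J. l w \<le> l (w \<otimes> u)"
  shows "set us \<subseteq> J \<Longrightarrow> red us \<Longrightarrow> l (w \<otimes> wp us) = l w + length us"
proof (induct us rule: rev_induct)
  case Nil then show ?case using w by simp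
next
  case (snoc t us')
  have r': "red us'" using red_split[of us' "[t]"] snoc by blast
  have uS: "set us' \<subseteq> S" "t \<in> S" using snoc J by auto
  have IH: "l (w \<otimes> wp us') = l w + length us'" using snoc r' by auto
  define x where "x = w \<otimes> wp us'"
  have xc: "x \<in> carrier W" using x_def w wp_closed uS by auto
  have e: "w \<otimes> wp (us' @ [t]) = x \<otimes> t" using x_def uS w by (simp add: wp_append wp_closed sC m_assoc)
  have "\<not> l (x \<otimes> t) \<le> l x"
  proof
    assume le: "l (x \<otimes> t) \<le> l x"
    obtain ws where ws: "length ws = l w" "set ws \<subseteq> S" "wp ws = w" using l_word w by blast
    have rr: "red (ws @ us')" using ws IH x_def uS by (simp add: wp_append)
    have "wp (ws @ us') = x" using ws x_def uS by (simp add: wp_append)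
    then obtain as z bs where d: "ws @ us' = as @ z # bs" "x \<otimes> t = wp (as @ bs)"
      using exch_r[OF uS(2) rr] le by auto
    from split3[OF d(1)] show False
    proof
      assume "\<exists>c d. us' = c @ z # d \<and> as = ws @ c \<and> bs = d"
      then obtain c dd where cd: "us' = c @ z # dd" "as = ws @ c" "bs = dd" by blast
      have sc: "set c \<subseteq> S" "set dd \<subseteq> S" using cd uS by auto
      have "w \<otimes> wp (us' @ [t]) = w \<otimes> wp (c @ dd)"
        using e d(2) cd ws sc by (simp add: wp_append)
      then have "wp (us' @ [t]) = wp (c @ dd)"
        using w sc uS by (simp add: wp_closed l_cancel)
      then have "l (wp (us' @ [t])) \<le> length (c @ dd)" using l_le[of "c @ dd"] sc by simp
      then show False using snoc(3) cd by simp
    next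
      assume "\<exists>a c. ws = a @ z # c \<and> as = a \<and> bs = c @ us'"
      then obtain a c where ac: "ws = a @ z # c" "as = a" "bs = c @ us'" by blast
      have sc: "set a \<subseteq> S" "set c \<subseteq> S" "set us' \<subseteq> S" using ac ws uS by auto
      define u where "u = wp us' \<otimes> t \<otimes> inv (wp us')"
      have tg: "t \<in> generate W J" using snoc(2) by (auto intro: generate.incl)
      have pg: "wp us' \<in> generate W J" using snoc(2) J wp_gen[of J us'] by auto
      have ug: "u \<in> generate W J" unfolding u_def
        using tg pg gen_sub[OF J]
        by (simp add: subgroup.m_closed subgroup.m_inv_closed)
      have cc: "wp us' \<in> carrier W" "wp (a @ c) \<in> carrier W" using sc wp_closed by auto
      have tc: "t \<in> carrier W" using sC[OF uS(2)] .
      have h: "w \<otimes> wp us' \<otimes> t = wp (a @ c) \<otimes> wp us'" using d(2) ac sc x_def by (simp add: wp_append wp_closed m_assoc)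
      have "w \<otimes> u = (w \<otimes> wp us' \<otimes> t) \<otimes> inv (wp us')"
        unfolding u_def using cc tc w by (simp add: m_assoc)
      also have "\<dots> = wp (a @ c)" unfolding h using cc by (simp add: m_assoc)
      finally have "w \<otimes> u = wp (a @ c)" .
      then have "l (w \<otimes> u) \<le> length ws - 1" using l_le[of "a @ c"] sc ac by simp
      moreover have "l w \<le> l (w \<otimes> u)" using mn ug by blast
      moreover have "length ws > 0" using ac by simp
      ultimately show False using ws by simp
    qed
  qed
  then have "l (x \<otimes> t) = l x + 1" using l_multS[OF uS(2) xc] by simp
  then show ?case using e IH x_def by simp
qed

lemma C4:
  assumes J: "J \<subseteq> S" and w: "w \<in> carrier W" and mn: "\<forall>u\<in>generate W J. l w \<le> l (w \<otimes> u)"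
    and u: "u \<in> generate W J"
  shows "l (w \<otimes> u) = l w + l u"
proof -
  obtain us where "set us \<subseteq> J" "wp us = u" "length us = l u" using red_word J u by blast
  then show ?thesis using C4_word[OF J w mn, of us] J by auto
qed

lemma C4L:
  assumes J: "J \<subseteq> S" and x: "x \<in> carrier W" and mn: "\<forall>v\<in>generate W J. l x \<le> l (v \<otimes> x)"
    and v: "v \<in> generate W J"
  shows "l (v \<otimes> x) = l v + l x"
proof -
  have gc: "generate W J \<subseteq> carrier W" using gen_carr J by auto
  have mn': "\<forall>u\<in>generate W J. l (inv x) \<le> l (inv x \<otimes> u)"
  proof
    fix u assume u: "u \<in> generate W J"
    then have ui: "inv u \<in> generate W J" using subgroup.m_inv_closed[OF gen_sub[OF J]] by blast
    have uc: "u \<in> carrier W" using u gc by auto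
    have a: "l x \<le> l (inv u \<otimes> x)" using mn ui by blast
    have "inv u \<otimes> x = inv (inv x \<otimes> u)" using uc x by (simp add: inv_mult_group)
    then have b: "l (inv u \<otimes> x) = l (inv (inv x \<otimes> u))" by (rule arg_cong)
    have c: "l (inv (inv x \<otimes> u)) = l (inv x \<otimes> u)" using uc x by (intro l_inv) simp
    have d: "l (inv x) = l x" using x by (rule l_inv)
    from a b c d show "l (inv x) \<le> l (inv x \<otimes> u)" by linarith
  qed
  have vi: "inv v \<in> generate W J" using v subgroup.m_inv_closed[OF gen_sub[OF J]] by blast
  have vc: "v \<in> carrier W" using v gc by auto
  have a: "l (inv x \<otimes> inv v) = l (inv x) + l (inv v)" using C4[OF J _ mn' vi] x by simp
  have "inv x \<otimes> inv v = inv (v \<otimes> x)" using vc x by (simp add: inv_mult_group)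
  then have b: "l (inv x \<otimes> inv v) = l (inv (v \<otimes> x))" by (rule arg_cong)
  have c: "l (inv (v \<otimes> x)) = l (v \<otimes> x)" using vc x by (intro l_inv) simp
  have d: "l (inv x) = l x" "l (inv v) = l v" using x vc l_inv by auto
  from a b c d show ?thesis by linarith
qed

lemma gen_inv: "J \<subseteq> S \<Longrightarrow> u \<in> generate W J \<Longrightarrow> inv u \<in> generate W J"
  using subgroup.m_inv_closed[OF gen_sub] by blast
lemma gen_mult: "J \<subseteq> S \<Longrightarrow> u \<in> generate W J \<Longrightarrow> v \<in> generate W J \<Longrightarrow> u \<otimes> v \<in> generate W J"
  using subgroup.m_closed[OF gen_sub] by blast
lemma gen_c: "J \<subseteq> S \<Longrightarrow> u \<in> generate W J \<Longrightarrow> u \<in> carrier W"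
  using gen_carr by blast

lemma dc_word:
  assumes K: "K \<subseteq> S" and J: "J \<subseteq> S" and x: "x \<in> carrier W" and y: "y \<in> carrier W"
    and LxK: "\<forall>v\<in>generate W K. l x \<le> l (v \<otimes> x)" and RxJ: "\<forall>u\<in>generate W J. l x \<le> l (x \<otimes> u)"
    and LyK: "\<forall>v\<in>generate W K. l y \<le> l (v \<otimes> y)" and RyJ: "\<forall>u\<in>generate W J. l y \<le> l (y \<otimes> u)"
  shows "set vs \<subseteq> K \<Longrightarrow> red vs \<Longrightarrow> u \<in> generate W J \<Longrightarrow> y = wp vs \<otimes> x \<otimes> u \<Longrightarrow> y = x"
proof (induct vs arbitrary: u)
  case Nil
  have uc: "u \<in> carrier W" using Nil gen_c J by blast
  have ye: "y = x \<otimes> u" using Nil x uc by simp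
  have a: "l y = l x + l u" using C4[OF J x RxJ Nil(3)] ye by simp
  have xe: "x = y \<otimes> inv u" using ye x uc by (simp add: m_assoc)
  have b: "l x = l y + l (inv u)" using C4[OF J y RyJ gen_inv[OF J Nil(3)]] xe by simp
  have "l (inv u) = l u" using uc by (rule l_inv)
  then have "l u = 0" using a b by linarith
  then have "u = \<one>" using l_zero uc by blast
  then show ?case using ye x by simp
next
  case (Cons v1 vs')
  have v1K: "v1 \<in> K" and vsK: "set vs' \<subseteq> K" using Cons by auto
  have v1S: "v1 \<in> S" using v1K K by auto
  have v1c: "v1 \<in> carrier W" using sC v1S by auto
  have r': "red vs'" using red_split[of "[v1]" vs'] Cons by simp
  define v' where "v' = wp vs'"
  have v'g: "v' \<in> generate W K" using wp_gen[OF K vsK] v'_def by simp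
  have v'c: "v' \<in> carrier W" using v'g gen_c K by blast
  have vg: "wp (v1 # vs') \<in> generate W K" using wp_gen[OF K] Cons(2) by blast
  have uc: "u \<in> carrier W" using Cons gen_c J by blast
  have ui: "inv u \<in> generate W J" using gen_inv[OF J Cons(4)] .
  define v where "v = wp (v1 # vs')"
  have ve: "v = v1 \<otimes> v'" using v_def v'_def by simp
  have vc: "v \<in> carrier W" using ve v1c v'c by simp
  have A: "l (v \<otimes> x) = length (v1 # vs') + l x" using C4L[OF K x LxK vg] Cons(3) v_def by simp
  have A': "l (v' \<otimes> x) = length vs' + l x" using C4L[OF K x LxK v'g] r' v'_def by simp
  have ye: "y = v \<otimes> x \<otimes> u" using Cons(5) v_def by simp
  have e1: "y \<otimes> inv u = v \<otimes> x" using ye vc x uc by (simp add: m_assoc)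
  have B: "l (y \<otimes> inv u) = l y + l u" using C4[OF J y RyJ ui] l_inv[OF uc] by simp
  obtain ys where ys: "length ys = l y" "set ys \<subseteq> S" "wp ys = y" using l_word y by blast
  obtain us2 where us2: "set us2 \<subseteq> J" "wp us2 = inv u" "length us2 = l (inv u)"
    using red_word[OF J ui] by blast
  have us2S: "set us2 \<subseteq> S" using us2 J by auto
  have wpe: "wp (ys @ us2) = v \<otimes> x" using ys us2 us2S e1 by (simp add: wp_append)
  have rr: "red (ys @ us2)" using ys us2S us2 wpe A B e1 l_inv[OF uc] by simp
  have e2: "v1 \<otimes> (v \<otimes> x) = v' \<otimes> x" using ve v1c v'c x ss[OF v1S]
    by (simp add: m_assoc[symmetric])
  have "l (v1 \<otimes> wp (ys @ us2)) \<le> l (wp (ys @ us2))" using wpe e2 A A' by simp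
  then obtain as z bs where d: "ys @ us2 = as @ z # bs" "v1 \<otimes> wp (ys @ us2) = wp (as @ bs)"
    using exch[OF v1S rr] by blast
  from split3[OF d(1)] show ?case
  proof
    assume "\<exists>c d. us2 = c @ z # d \<and> as = ys @ c \<and> bs = d"
    then obtain c dd where cd: "us2 = c @ z # dd" "as = ys @ c" "bs = dd" by blast
    have cJ: "set (c @ dd) \<subseteq> J" using cd us2 by auto
    have cS: "set c \<subseteq> S" "set dd \<subseteq> S" using cJ J by auto
    define u3 where "u3 = wp (c @ dd) \<otimes> u"
    have u3g: "u3 \<in> generate W J" unfolding u3_def using wp_gen[OF J cJ] Cons(4) gen_mult[OF J] by blast
    have u3c: "u3 \<in> carrier W" using u3g gen_c J by blast
    have wc: "wp (c @ dd) \<in> carrier W" using cS wp_closed by auto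
    have "v1 \<otimes> (y \<otimes> inv u) = y \<otimes> wp (c @ dd)"
      using d(2) wpe e1 cd ys cS by (simp add: wp_append)
    then have "v1 \<otimes> (y \<otimes> inv u) \<otimes> u = y \<otimes> wp (c @ dd) \<otimes> u" by simp
    then have f1: "v1 \<otimes> y = y \<otimes> u3" unfolding u3_def using v1c y uc wc by (simp add: m_assoc)
    have "v1 \<otimes> y = (v1 \<otimes> (v \<otimes> x)) \<otimes> u" using ye v1c vc x uc by (simp add: m_assoc)
    then have f2: "v1 \<otimes> y = v' \<otimes> x \<otimes> u" using e2 by simp
    have "y = v' \<otimes> x \<otimes> (u \<otimes> inv u3)"
    proof -
      have "y = y \<otimes> u3 \<otimes> inv u3" using y u3c by (simp add: m_assoc)
      also have "\<dots> = v' \<otimes> x \<otimes> u \<otimes> inv u3" using f1 f2 by simp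
      also have "\<dots> = v' \<otimes> x \<otimes> (u \<otimes> inv u3)" using v'c x uc u3c by (simp add: m_assoc)
      finally show ?thesis .
    qed
    moreover have "u \<otimes> inv u3 \<in> generate W J" using Cons(4) gen_inv[OF J u3g] gen_mult[OF J] by blast
    ultimately show "y = x" using Cons(1)[OF vsK r'] v'_def by blast
  next
    assume "\<exists>a c. ys = a @ z # c \<and> as = a \<and> bs = c @ us2"
    then obtain a c where ac: "ys = a @ z # c" "as = a" "bs = c @ us2" by blast
    have aS: "set a \<subseteq> S" "set c \<subseteq> S" using ac ys by auto
    have wc: "wp (a @ c) \<in> carrier W" using aS wp_closed by auto
    have "v1 \<otimes> (y \<otimes> inv u) = wp (a @ c) \<otimes> inv u"
      using d(2) wpe e1 ac us2 aS us2S uc by (simp add: wp_append wp_closed m_assoc)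
    then have "v1 \<otimes> (y \<otimes> inv u) \<otimes> u = wp (a @ c) \<otimes> inv u \<otimes> u" by simp
    then have "v1 \<otimes> y = wp (a @ c)" using v1c y uc wc by (simp add: m_assoc)
    then have "l (v1 \<otimes> y) \<le> length ys - 1" using l_le[of "a @ c"] aS ac by simp
    moreover have "l y \<le> l (v1 \<otimes> y)" using LyK generate.incl[OF v1K] by blast
    moreover have "length ys > 0" using ac by simp
    ultimately show "y = x" using ys by simp
  qed
qed

lemma dc:
  assumes K: "K \<subseteq> S" and J: "J \<subseteq> S" and x: "x \<in> carrier W" and y: "y \<in> carrier W"
    and LxK: "\<forall>v\<in>generate W K. l x \<le> l (v \<otimes> x)" and RxJ: "\<forall>u\<in>generate W J. l x \<le> l (x \<otimes> u)"
    and LyK: "\<forall>v\<in>generate W K. l y \<le> l (v \<otimes> y)" and RyJ: "\<forall>u\<in>generate W J. l y \<le> l (y \<otimes> u)"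
    and v: "v \<in> generate W K" and u: "u \<in> generate W J" and e: "y = v \<otimes> x \<otimes> u"
  shows "y = x"
proof -
  obtain vs where "set vs \<subseteq> K" "wp vs = v" "length vs = l v" using red_word[OF K v] by blast
  then show ?thesis using dc_word[OF K J x y LxK RxJ LyK RyJ, of vs u] u e K by auto
qed

end

fun gal :: "'c set \<Rightarrow> ('c \<Rightarrow> 'c \<Rightarrow> 'w) \<Rightarrow> 'c \<Rightarrow> 'w list \<Rightarrow> 'c \<Rightarrow> bool" where
  "gal D d x [] y = (x = y)"
| "gal D d x (t # ts) y = (\<exists>x'\<in>D. d x x' = t \<and> gal D d x' ts y)"

locale bld = cox W S for W :: "('w, 'm) monoid_scheme" (structure) and S +
  fixes \<Delta> :: "'c set" and \<delta> :: "'c \<Rightarrow> 'c \<Rightarrow> 'w"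
  assumes bd: "building W S \<Delta> \<delta>"
begin

lemma bparts: "(\<forall>x\<in>\<Delta>. \<forall>y\<in>\<Delta>. \<delta> x y \<in> carrier W)
    \<and> (\<forall>x\<in>\<Delta>. \<forall>y\<in>\<Delta>. \<delta> x y = \<one> \<longleftrightarrow> x = y)
    \<and> (\<forall>x\<in>\<Delta>. \<forall>y\<in>\<Delta>. \<forall>x'\<in>\<Delta>. \<forall>s\<in>S. \<delta> x' x = s \<longrightarrow>
          (\<delta> x' y = s \<otimes> \<delta> x y \<or> \<delta> x' y = \<delta> x y)
          \<and> (l (s \<otimes> \<delta> x y) = l (\<delta> x y) + 1
               \<longrightarrow> \<delta> x' y = s \<otimes> \<delta> x y))
    \<and> (\<forall>x\<in>\<Delta>. \<forall>y\<in>\<Delta>. \<forall>s\<in>S. \<exists>x'\<in>\<Delta>. \<delta> x' x = s \<and> \<delta> x' y = s \<otimes> \<delta> x y)"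
  using bd unfolding building_def by (rule conjunct2)

lemma dC: "x \<in> \<Delta> \<Longrightarrow> y \<in> \<Delta> \<Longrightarrow> \<delta> x y \<in> carrier W"
  using conjunct1[OF bparts] by blast
lemma d1: "x \<in> \<Delta> \<Longrightarrow> y \<in> \<Delta> \<Longrightarrow> \<delta> x y = \<one> \<longleftrightarrow> x = y"
  using conjunct1[OF conjunct2[OF bparts]] by blast

lemma WD2: "x \<in> \<Delta> \<Longrightarrow> y \<in> \<Delta> \<Longrightarrow> x' \<in> \<Delta> \<Longrightarrow> s \<in> S \<Longrightarrow> \<delta> x' x = s \<Longrightarrow>
   (\<delta> x' y = s \<otimes> \<delta> x y \<or> \<delta> x' y = \<delta> x y) \<and> (l (s \<otimes> \<delta> x y) = l (\<delta> x y) + 1 \<longrightarrow> \<delta> x' y = s \<otimes> \<delta> x y)"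
  using conjunct1[OF conjunct2[OF conjunct2[OF bparts]]] by blast

lemma WD3: "x \<in> \<Delta> \<Longrightarrow> y \<in> \<Delta> \<Longrightarrow> s \<in> S \<Longrightarrow> \<exists>x'\<in>\<Delta>. \<delta> x' x = s \<and> \<delta> x' y = s \<otimes> \<delta> x y"
  using conjunct2[OF conjunct2[OF conjunct2[OF bparts]]] by blast

lemma d_self[simp]: "x \<in> \<Delta> \<Longrightarrow> \<delta> x x = \<one>" using d1 by blast

lemma sym_adj: assumes "x \<in> \<Delta>" "x' \<in> \<Delta>" "s \<in> S" "\<delta> x' x = s" shows "\<delta> x x' = s"
proof -
  have "\<delta> x' x' = s \<otimes> \<delta> x x' \<or> \<delta> x' x' = \<delta> x x'" using WD2[OF assms(1,2,2,3,4)] by blast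
  then show ?thesis
  proof
    assume "\<delta> x' x' = s \<otimes> \<delta> x x'"
    then have "s \<otimes> \<delta> x x' = \<one>" using assms by simp
    have c: "\<delta> x x' \<in> carrier W" "s \<in> carrier W" using assms dC sC by auto
    have "\<delta> x x' = (s \<otimes> s) \<otimes> \<delta> x x'" using ss assms c by simp
    also have "\<dots> = s \<otimes> (s \<otimes> \<delta> x x')" using c by (simp add: m_assoc)
    finally show ?thesis using \<open>s \<otimes> \<delta> x x' = \<one>\<close> c by simp
  next
    assume "\<delta> x' x' = \<delta> x x'"
    then have "\<delta> x x' = \<one>" using assms by simp
    then have "x = x'" using assms d1 by blast
    then show ?thesis using assms one_nS by simp
  qed
qed

lemma gal_D: "gal \<Delta> \<delta> x ws y \<Longrightarrow> x \<in> \<Delta> \<Longrightarrow> y \<in> \<Delta>"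
  by (induct ws arbitrary: x) auto

lemma gal_append: "gal \<Delta> \<delta> x (as @ bs) y \<longleftrightarrow> (\<exists>z. gal \<Delta> \<delta> x as z \<and> gal \<Delta> \<delta> z bs y)"
  by (induct as arbitrary: x) auto

lemma gal_exists: "set ws \<subseteq> S \<Longrightarrow> x \<in> \<Delta> \<Longrightarrow> y \<in> \<Delta> \<Longrightarrow> \<delta> x y = wp ws \<Longrightarrow> gal \<Delta> \<delta> x ws y"
proof (induct ws arbitrary: x)
  case Nil then show ?case using d1 by simp
next
  case (Cons t ts)
  obtain x' where x': "x' \<in> \<Delta>" "\<delta> x' x = t" "\<delta> x' y = t \<otimes> \<delta> x y" using WD3[of x y t] Cons by auto
  have tc: "t \<in> carrier W" using Cons sC by auto
  have "\<delta> x' y = wp ts" using x' Cons ss[of t] tc wp_closed[of ts] by (simp add: m_assoc[symmetric])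
  moreover have "\<delta> x x' = t" using sym_adj x' Cons by auto
  ultimately show ?case using Cons x' by auto
qed

lemma gal_rev: "set ws \<subseteq> S \<Longrightarrow> x \<in> \<Delta> \<Longrightarrow> gal \<Delta> \<delta> x ws y \<Longrightarrow> gal \<Delta> \<delta> y (rev ws) x"
proof (induct ws arbitrary: x)
  case Nil then show ?case by simp
next
  case (Cons t ts)
  then obtain x' where x': "x' \<in> \<Delta>" "\<delta> x x' = t" "gal \<Delta> \<delta> x' ts y" by auto
  have "gal \<Delta> \<delta> y (rev ts) x'" using Cons x' by auto
  moreover have "gal \<Delta> \<delta> x' [t] x" using sym_adj[of x' x t] x' Cons by auto
  ultimately show ?case by (auto simp: gal_append)
qed

lemma gal_red: "red ws \<Longrightarrow> x \<in> \<Delta> \<Longrightarrow> gal \<Delta> \<delta> x ws y \<Longrightarrow> \<delta> x y = wp ws"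
proof (induct ws arbitrary: x)
  case Nil then show ?case by simp
next
  case (Cons t ts)
  then obtain x' where x': "x' \<in> \<Delta>" "\<delta> x x' = t" "gal \<Delta> \<delta> x' ts y" by auto
  have r: "red ts" using red_split[of "[t]" ts] Cons by simp
  have y: "y \<in> \<Delta>" using gal_D x' by blast
  have e: "\<delta> x' y = wp ts" using Cons r x' by blast
  have "l (t \<otimes> \<delta> x' y) = l (\<delta> x' y) + 1" using Cons(2) r e by simp
  then show ?case using WD2[OF x'(1) y Cons(3), of t] Cons x' e by simp
qed

lemma d_inv: assumes "x \<in> \<Delta>" "y \<in> \<Delta>" shows "\<delta> y x = inv (\<delta> x y)"
proof -
  obtain ws where ws: "length ws = l (\<delta> x y)" "set ws \<subseteq> S" "wp ws = \<delta> x y" using l_word dC assms by blast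
  have "gal \<Delta> \<delta> x ws y" using gal_exists[OF ws(2) assms ws(3)[symmetric]] .
  then have g: "gal \<Delta> \<delta> y (rev ws) x" using gal_rev[OF ws(2) assms(1)] by blast
  have e: "wp (rev ws) = inv (\<delta> x y)" using wp_rev[OF ws(2)] ws(3) by simp
  have "l (wp (rev ws)) = l (\<delta> x y)" unfolding e by (rule l_inv[OF dC[OF assms]])
  then have "red (rev ws)" using ws by simp
  then have "\<delta> y x = wp (rev ws)" using gal_red g assms(2) by blast
  then show ?thesis using e by simp
qed

lemma WD2r: assumes c: "c \<in> \<Delta>" and y: "y \<in> \<Delta>" and y': "y' \<in> \<Delta>" and t: "t \<in> S" and a: "\<delta> y y' = t"
  shows "(\<delta> c y' = \<delta> c y \<otimes> t \<or> \<delta> c y' = \<delta> c y) \<and> (l (\<delta> c y \<otimes> t) = l (\<delta> c y) + 1 \<longrightarrow> \<delta> c y' = \<delta> c y \<otimes> t)"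
proof -
  have a': "\<delta> y' y = t" using sym_adj a y y' t by blast
  have tc: "t \<in> carrier W" using t sC by auto
  have dc': "\<delta> y c \<in> carrier W" using dC y c by auto
  have i1: "inv (t \<otimes> \<delta> y c) = \<delta> c y \<otimes> t" using d_inv[OF y c] tc dc' inv_s[OF t] by (simp add: inv_mult_group)
  have i2: "l (t \<otimes> \<delta> y c) = l (\<delta> c y \<otimes> t)" using i1 l_inv[of "t \<otimes> \<delta> y c"] tc dc' by simp
  have i3: "l (\<delta> y c) = l (\<delta> c y)" using d_inv[OF c y] dC[OF c y] by simp
  have W: "(\<delta> y' c = t \<otimes> \<delta> y c \<or> \<delta> y' c = \<delta> y c) \<and> (l (t \<otimes> \<delta> y c) = l (\<delta> y c) + 1 \<longrightarrow> \<delta> y' c = t \<otimes> \<delta> y c)"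
    using WD2[OF y c y' t a'] .
  have e1: "\<delta> c y' = inv (\<delta> y' c)" using d_inv[OF y' c] .
  have e2: "inv (\<delta> y c) = \<delta> c y" using d_inv[OF c y] dC[OF c y] by simp
  show ?thesis
  proof (intro conjI impI)
    show "\<delta> c y' = \<delta> c y \<otimes> t \<or> \<delta> c y' = \<delta> c y"
      using W e1 e2 i1 by auto
  next
    assume "l (\<delta> c y \<otimes> t) = l (\<delta> c y) + 1"
    then have "l (t \<otimes> \<delta> y c) = l (\<delta> y c) + 1" using i2 i3 by linarith
    then have "\<delta> y' c = t \<otimes> \<delta> y c" using W by blast
    then show "\<delta> c y' = \<delta> c y \<otimes> t" using e1 i1 by simp
  qed
qed

lemma WD3r: assumes c: "c \<in> \<Delta>" and y: "y \<in> \<Delta>" and t: "t \<in> S"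
  shows "\<exists>y'\<in>\<Delta>. \<delta> y y' = t \<and> \<delta> c y' = \<delta> c y \<otimes> t"
proof -
  obtain y' where yy: "y' \<in> \<Delta>" "\<delta> y' y = t" "\<delta> y' c = t \<otimes> \<delta> y c" using WD3[OF y c t] by blast
  have tc: "t \<in> carrier W" using t sC by auto
  have dc': "\<delta> y c \<in> carrier W" using dC y c by auto
  have "\<delta> c y' = inv (t \<otimes> \<delta> y c)" using d_inv[OF yy(1) c] yy by simp
  also have "\<dots> = \<delta> c y \<otimes> t" using d_inv[OF y c] tc dc' inv_s[OF t] by (simp add: inv_mult_group)
  finally show ?thesis using yy sym_adj[of y y' t] y t by blast
qed

lemma gal_list: "set ws \<subseteq> S \<Longrightarrow> x \<in> \<Delta> \<Longrightarrow> gal \<Delta> \<delta> x ws y \<Longrightarrow>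
   \<exists>xs. length xs = Suc (length ws) \<and> hd xs = x \<and> last xs = y \<and> set xs \<subseteq> \<Delta>
       \<and> (\<forall>i<length ws. \<delta> (xs ! i) (xs ! Suc i) \<in> S)"
proof (induct ws arbitrary: x)
  case Nil then show ?case by (intro exI[of _ "[x]"]) simp
next
  case (Cons t ts)
  then obtain x' where x': "x' \<in> \<Delta>" "\<delta> x x' = t" "gal \<Delta> \<delta> x' ts y" by auto
  have tsS: "set ts \<subseteq> S" using Cons by auto
  obtain xs where xs: "length xs = Suc (length ts)" "hd xs = x'" "last xs = y" "set xs \<subseteq> \<Delta>"
       "\<forall>i<length ts. \<delta> (xs ! i) (xs ! Suc i) \<in> S" using Cons(1)[OF tsS x'(1) x'(3)] by blast
  have ne: "xs \<noteq> []" using xs by auto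
  have h0: "xs ! 0 = x'" using xs ne by (simp add: hd_conv_nth)
  have "\<forall>i<length (t # ts). \<delta> ((x # xs) ! i) ((x # xs) ! Suc i) \<in> S"
  proof (intro allI impI)
    fix i assume "i < length (t # ts)"
    then show "\<delta> ((x # xs) ! i) ((x # xs) ! Suc i) \<in> S"
      using xs h0 x' Cons(2) by (cases i) auto
  qed
  then show ?case using xs ne Cons x' by (intro exI[of _ "x # xs"]) auto
qed

lemma list_bound: "length xs = Suc n \<Longrightarrow> hd xs = x \<Longrightarrow> last xs = y \<Longrightarrow> set xs \<subseteq> \<Delta>
   \<Longrightarrow> (\<forall>i<n. \<delta> (xs ! i) (xs ! Suc i) \<in> S) \<Longrightarrow> l (\<delta> x y) \<le> n"
proof (induct n arbitrary: xs x)
  case 0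
  then obtain a where "xs = [a]" by (cases xs) auto
  then have "x = y" "x \<in> \<Delta>" using 0 by auto
  then show ?case using l_zero by simp
next
  case (Suc n)
  then obtain xs' where xs: "xs = x # xs'" by (cases xs) auto
  have ne: "xs' \<noteq> []" using Suc xs by auto
  have l': "length xs' = Suc n" "last xs' = y" "set xs' \<subseteq> \<Delta>" using Suc xs ne by auto
  have st: "\<forall>i<n. \<delta> (xs' ! i) (xs' ! Suc i) \<in> S"
  proof (intro allI impI)
    fix i assume "i < n"
    then have "\<delta> (xs ! Suc i) (xs ! Suc (Suc i)) \<in> S" using Suc(6) by simp
    then show "\<delta> (xs' ! i) (xs' ! Suc i) \<in> S" using xs by simp
  qed
  define x1 where "x1 = hd xs'"
  have x1: "x1 \<in> \<Delta>" "x \<in> \<Delta>" "y \<in> \<Delta>" using l' ne x1_def xs Suc(4) Suc(5) by auto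
  have IH: "l (\<delta> x1 y) \<le> n" using Suc(1)[OF l'(1) x1_def[symmetric] l'(2) l'(3) st] .
  have "xs' ! 0 = x1" using ne x1_def by (simp add: hd_conv_nth)
  then have s: "\<delta> x x1 \<in> S" using Suc(6) xs by force
  have "\<delta> x y = \<delta> x x1 \<otimes> \<delta> x1 y \<or> \<delta> x y = \<delta> x1 y"
    using WD2[OF x1(1) x1(3) x1(2) s refl] by blast
  moreover have "l (\<delta> x x1 \<otimes> \<delta> x1 y) \<le> l (\<delta> x1 y) + 1" using l_Smult[OF s dC[OF x1(1) x1(3)]] .
  ultimately show ?case using IH by auto
qed

lemma gdist_eq: assumes "x \<in> \<Delta>" "y \<in> \<Delta>" shows "gdist S \<Delta> \<delta> x y = l (\<delta> x y)"
proof -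
  let ?P = "\<lambda>n. \<exists>xs. length xs = Suc n \<and> hd xs = x \<and> last xs = y \<and> set xs \<subseteq> \<Delta>
       \<and> (\<forall>i<n. \<delta> (xs ! i) (xs ! Suc i) \<in> S)"
  obtain ws where ws: "length ws = l (\<delta> x y)" "set ws \<subseteq> S" "wp ws = \<delta> x y" using l_word dC assms by blast
  have "gal \<Delta> \<delta> x ws y" using gal_exists[OF ws(2) assms ws(3)[symmetric]] .
  then have p: "?P (l (\<delta> x y))" using gal_list[OF ws(2) assms(1)] ws(1) by metis
  have le: "(LEAST n. ?P n) \<le> l (\<delta> x y)" using Least_le[of ?P, OF p] .
  have "?P (LEAST n. ?P n)" using LeastI[of ?P, OF p] .
  then have "l (\<delta> x y) \<le> (LEAST n. ?P n)" using list_bound by blast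
  then show ?thesis unfolding gdist_def using le by simp
qed

abbreviation "res J x \<equiv> residue W \<Delta> \<delta> J x"

lemma res_D: "y \<in> res J x \<Longrightarrow> y \<in> \<Delta>" by (simp add: residue_def)
lemma res_iff: "y \<in> res J x \<longleftrightarrow> y \<in> \<Delta> \<and> \<delta> x y \<in> generate W J" by (simp add: residue_def)
lemma res_self: "x \<in> \<Delta> \<Longrightarrow> x \<in> res J x" by (simp add: residue_def generate.one)

lemma RES_word: assumes J: "J \<subseteq> S" and c: "c \<in> \<Delta>" and y: "y \<in> \<Delta>"
  shows "set ws \<subseteq> J \<Longrightarrow> y0 \<in> \<Delta> \<Longrightarrow> \<delta> y0 y = wp ws \<Longrightarrow> \<exists>u\<in>generate W J. \<delta> c y = \<delta> c y0 \<otimes> u"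
proof (induct ws arbitrary: y0)
  case Nil
  then have "y0 = y" using d1 y by simp
  then show ?case using dC[OF c y] by (intro bexI[of _ "\<one>"]) (auto intro: generate.one)
next
  case (Cons t ts)
  have tS: "t \<in> S" and tJ: "t \<in> J" using Cons J by auto
  have tc: "t \<in> carrier W" using sC tS .
  have tsS: "set ts \<subseteq> S" using Cons J by auto
  obtain x' where x': "x' \<in> \<Delta>" "\<delta> x' y0 = t" "\<delta> x' y = t \<otimes> \<delta> y0 y" using WD3[OF Cons(3) y tS] by blast
  have "\<delta> x' y = (t \<otimes> t) \<otimes> wp ts" using x'(3) Cons(4) tc wp_closed[OF tsS] by (simp add: m_assoc)
  then have e: "\<delta> x' y = wp ts" using ss[OF tS] wp_closed[OF tsS] by simp
  have a: "\<delta> y0 x' = t" using sym_adj[OF Cons(3) x'(1) tS x'(2)] .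
  obtain u' where u': "u' \<in> generate W J" "\<delta> c y = \<delta> c x' \<otimes> u'" using Cons(1)[OF _ x'(1) e] Cons(2) by auto
  have u'c: "u' \<in> carrier W" using gen_c[OF J u'(1)] .
  have "\<delta> c x' = \<delta> c y0 \<otimes> t \<or> \<delta> c x' = \<delta> c y0" using WD2r[OF c Cons(3) x'(1) tS a] by blast
  then show ?case
  proof
    assume h: "\<delta> c x' = \<delta> c y0 \<otimes> t"
    have "\<delta> c y = \<delta> c y0 \<otimes> (t \<otimes> u')" using u'(2) h tc u'c dC[OF c Cons(3)] by (simp add: m_assoc)
    moreover have "t \<otimes> u' \<in> generate W J" using gen_mult[OF J generate.incl[OF tJ] u'(1)] .
    ultimately show ?thesis by blast
  next
    assume h: "\<delta> c x' = \<delta> c y0"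
    then show ?thesis using u' by auto
  qed
qed

lemma RES: assumes J: "J \<subseteq> S" and c: "c \<in> \<Delta>" and y: "y \<in> \<Delta>" and y0: "y0 \<in> \<Delta>"
  and g: "\<delta> y0 y \<in> generate W J"
  shows "\<exists>u\<in>generate W J. \<delta> c y = \<delta> c y0 \<otimes> u"
proof -
  obtain ws where "set ws \<subseteq> J" "wp ws = \<delta> y0 y" using gen_word[OF J g] by blast
  then show ?thesis using RES_word[OF J c y, of ws y0] y0 by auto
qed

lemma res_recenter: assumes J: "J \<subseteq> S" and x0: "x0 \<in> \<Delta>" and z: "z \<in> res J x0"
  shows "res J z = res J x0"
proof -
  have zD: "z \<in> \<Delta>" using res_D[OF z] .
  have g: "\<delta> x0 z \<in> generate W J" using z res_iff by blast
  have g': "\<delta> z x0 \<in> generate W J" using d_inv[OF x0 zD] gen_inv[OF J g] by simp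
  have A: "y \<in> res J x0" if y: "y \<in> res J z" for y
  proof -
    have yD: "y \<in> \<Delta>" and gy: "\<delta> z y \<in> generate W J" using y res_iff by auto
    obtain u where u: "u \<in> generate W J" "\<delta> x0 y = \<delta> x0 z \<otimes> u" using RES[OF J x0 yD zD gy] by blast
    then have "\<delta> x0 y \<in> generate W J" using gen_mult[OF J g u(1)] by simp
    then show "y \<in> res J x0" using yD res_iff by blast
  qed
  have B: "y \<in> res J z" if y: "y \<in> res J x0" for y
  proof -
    have yD: "y \<in> \<Delta>" and gy: "\<delta> x0 y \<in> generate W J" using y res_iff by auto
    obtain u where u: "u \<in> generate W J" "\<delta> z y = \<delta> z x0 \<otimes> u" using RES[OF J zD yD x0 gy] by blast
    then have "\<delta> z y \<in> generate W J" using gen_mult[OF J g' u(1)] by simp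
    then show "y \<in> res J z" using yD res_iff by blast
  qed
  show ?thesis using A B by blast
qed

lemma res_left_word: assumes J: "J \<subseteq> S" and b: "b \<in> \<Delta>" and r: "r \<in> \<Delta>"
  shows "set ws \<subseteq> J \<Longrightarrow> \<exists>b'\<in>res J b. \<delta> b' r = wp ws \<otimes> \<delta> b r"
proof (induct ws)
  case Nil then show ?case using res_self[OF b] dC[OF b r] by auto
next
  case (Cons t ts)
  have tS: "t \<in> S" and tJ: "t \<in> J" using Cons J by auto
  have tsS: "set ts \<subseteq> S" using Cons J by auto
  obtain b1 where b1: "b1 \<in> res J b" "\<delta> b1 r = wp ts \<otimes> \<delta> b r" using Cons by auto
  have b1D: "b1 \<in> \<Delta>" using res_D[OF b1(1)] .
  obtain b' where b': "b' \<in> \<Delta>" "\<delta> b' b1 = t" "\<delta> b' r = t \<otimes> \<delta> b1 r" using WD3[OF b1D r tS] by blast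
  have "\<delta> b1 b' = t" using sym_adj[OF b1D b'(1) tS b'(2)] .
  then have "b' \<in> res J b1" using b'(1) res_iff generate.incl[OF tJ] by auto
  then have inb: "b' \<in> res J b" using res_recenter[OF J b b1(1)] by simp
  have "\<delta> b' r = wp (t # ts) \<otimes> \<delta> b r" using b'(3) b1(2) sC[OF tS] wp_closed[OF tsS] dC[OF b r] by (simp add: m_assoc)
  then show ?case using inb by blast
qed

lemma res_left: assumes J: "J \<subseteq> S" and b: "b \<in> \<Delta>" and r: "r \<in> \<Delta>" and v: "v \<in> generate W J"
  shows "\<exists>b'\<in>res J b. \<delta> b' r = v \<otimes> \<delta> b r"
proof -
  obtain ws where "set ws \<subseteq> J" "wp ws = v" using gen_word[OF J v] by blast
  then show ?thesis using res_left_word[OF J b r, of ws] by auto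
qed

lemma res_right: assumes J: "J \<subseteq> S" and b: "b \<in> \<Delta>" and r: "r \<in> \<Delta>" and u: "u \<in> generate W J"
  shows "\<exists>r'\<in>res J r. \<delta> b r' = \<delta> b r \<otimes> u"
proof -
  obtain r' where r': "r' \<in> res J r" "\<delta> r' b = inv u \<otimes> \<delta> r b" using res_left[OF J r b gen_inv[OF J u]] by blast
  have r'D: "r' \<in> \<Delta>" using res_D[OF r'(1)] .
  have uc: "u \<in> carrier W" using gen_c[OF J u] .
  have "\<delta> b r' = inv (inv u \<otimes> \<delta> r b)" using d_inv[OF r'D b] r'(2) by simp
  also have "\<dots> = inv (\<delta> r b) \<otimes> u" using uc dC[OF r b] by (simp add: inv_mult_group)
  also have "\<dots> = \<delta> b r \<otimes> u" using d_inv[OF b r] dC[OF b r] by simp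
  finally show ?thesis using r' by blast
qed

lemma gate_word: assumes J: "J \<subseteq> S" and c: "c \<in> \<Delta>" and z: "z \<in> \<Delta>"
  and mn: "\<forall>u\<in>generate W J. l (\<delta> c z) \<le> l (\<delta> c z \<otimes> u)"
  shows "set us \<subseteq> J \<Longrightarrow> red us \<Longrightarrow> y \<in> \<Delta> \<Longrightarrow> \<delta> z y = wp us \<Longrightarrow> \<delta> c y = \<delta> c z \<otimes> wp us"
proof (induct us arbitrary: y rule: rev_induct)
  case Nil
  then have "y = z" using d1[OF z] by simp
  then show ?case using dC[OF c z] by simp
next
  case (snoc t us')
  have tS: "t \<in> S" using snoc J by auto
  have tc: "t \<in> carrier W" using sC[OF tS] .
  have usS: "set us' \<subseteq> S" using snoc J by auto
  have r': "red us'" using red_split[of us' "[t]"] snoc by blast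
  obtain y' where y': "y' \<in> \<Delta>" "\<delta> y y' = t" "\<delta> z y' = \<delta> z y \<otimes> t" using WD3r[OF z snoc(4) tS] by blast
  have "\<delta> z y' = wp us' \<otimes> (t \<otimes> t)" using y'(3) snoc(5) usS tS tc wp_closed[OF usS] by (simp add: wp_append m_assoc)
  then have e: "\<delta> z y' = wp us'" using ss[OF tS] wp_closed[OF usS] by simp
  have IH: "\<delta> c y' = \<delta> c z \<otimes> wp us'" using snoc(1)[OF _ r' y'(1) e] snoc(2) by simp
  have a: "\<delta> y' y = t" using sym_adj[OF y'(1) snoc(4) tS y'(2)] .
  have wc: "\<delta> c z \<in> carrier W" using dC[OF c z] .
  have L1: "l (\<delta> c z \<otimes> wp (us' @ [t])) = l (\<delta> c z) + length (us' @ [t])"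
    using C4_word[OF J wc mn] snoc(2) snoc(3) by blast
  have L2: "l (\<delta> c z \<otimes> wp us') = l (\<delta> c z) + length us'"
    using C4_word[OF J wc mn] snoc(2) r' by simp
  have ee: "\<delta> c z \<otimes> wp (us' @ [t]) = \<delta> c y' \<otimes> t" using IH wc usS tS tc wp_closed[OF usS] by (simp add: wp_append m_assoc)
  have "l (\<delta> c y' \<otimes> t) = l (\<delta> c y') + 1" using L1 L2 ee IH by simp
  then have "\<delta> c y = \<delta> c y' \<otimes> t" using WD2r[OF c y'(1) snoc(4) tS a] by blast
  then show ?case using ee by simp
qed

lemma gate: assumes J: "J \<subseteq> S" and c: "c \<in> \<Delta>" and x0: "x0 \<in> \<Delta>"
  shows "\<exists>z\<in>res J x0. \<forall>y\<in>res J x0. \<delta> c y = \<delta> c z \<otimes> \<delta> z y \<and> l (\<delta> c y) = l (\<delta> c z) + l (\<delta> z y)"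
proof -
  let ?P = "\<lambda>n. \<exists>z\<in>res J x0. l (\<delta> c z) = n"
  have p: "?P (l (\<delta> c x0))" using res_self[OF x0] by blast
  obtain z where z: "z \<in> res J x0" "l (\<delta> c z) = (LEAST n. ?P n)" using LeastI[of ?P, OF p] by blast
  have zmin: "l (\<delta> c z) \<le> l (\<delta> c y)" if "y \<in> res J x0" for y
    using Least_le[of ?P "l (\<delta> c y)"] that z(2) by auto
  have zD: "z \<in> \<Delta>" using res_D[OF z(1)] .
  have R: "res J z = res J x0" using res_recenter[OF J x0 z(1)] .
  have mn: "\<forall>u\<in>generate W J. l (\<delta> c z) \<le> l (\<delta> c z \<otimes> u)"
  proof
    fix u assume u: "u \<in> generate W J"
    obtain r' where "r' \<in> res J z" "\<delta> c r' = \<delta> c z \<otimes> u" using res_right[OF J c zD u] by blast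
    then show "l (\<delta> c z) \<le> l (\<delta> c z \<otimes> u)" using zmin R by metis
  qed
  have "\<forall>y\<in>res J x0. \<delta> c y = \<delta> c z \<otimes> \<delta> z y \<and> l (\<delta> c y) = l (\<delta> c z) + l (\<delta> z y)"
  proof
    fix y assume y: "y \<in> res J x0"
    then have yD: "y \<in> \<Delta>" and g: "\<delta> z y \<in> generate W J" using R res_iff by auto
    obtain us where us: "set us \<subseteq> J" "wp us = \<delta> z y" "length us = l (\<delta> z y)" using red_word[OF J g] by blast
    have "red us" using us J by auto
    then have "\<delta> c y = \<delta> c z \<otimes> wp us" using gate_word[OF J c zD mn us(1)] yD us(2)[symmetric] by blast
    then have e: "\<delta> c y = \<delta> c z \<otimes> \<delta> z y" using us by simp
    have "l (\<delta> c z \<otimes> \<delta> z y) = l (\<delta> c z) + l (\<delta> z y)" using C4[OF J dC[OF c zD] mn g] .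
    then show "\<delta> c y = \<delta> c z \<otimes> \<delta> z y \<and> l (\<delta> c y) = l (\<delta> c z) + l (\<delta> z y)" using e by simp
  qed
  then show ?thesis using z(1) by blast
qed

lemma proj_char: assumes J: "J \<subseteq> S" and c: "c \<in> \<Delta>" and x0: "x0 \<in> \<Delta>"
  shows "proj S \<Delta> \<delta> (res J x0) c \<in> res J x0
    \<and> (\<forall>y\<in>res J x0. \<delta> c y = \<delta> c (proj S \<Delta> \<delta> (res J x0) c) \<otimes> \<delta> (proj S \<Delta> \<delta> (res J x0) c) y
        \<and> l (\<delta> c y) = l (\<delta> c (proj S \<Delta> \<delta> (res J x0) c)) + l (\<delta> (proj S \<Delta> \<delta> (res J x0) c) y))
    \<and> (\<forall>z\<in>res J x0. (\<forall>y\<in>res J x0. l (\<delta> c z) \<le> l (\<delta> c y)) \<longrightarrow> proj S \<Delta> \<delta> (res J x0) c = z)"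
proof -
  let ?R = "res J x0"
  obtain z where z: "z \<in> ?R" "\<forall>y\<in>?R. \<delta> c y = \<delta> c z \<otimes> \<delta> z y \<and> l (\<delta> c y) = l (\<delta> c z) + l (\<delta> z y)"
    using gate[OF J c x0] by blast
  have zD: "z \<in> \<Delta>" using res_D[OF z(1)] .
  have uniq: "y = z" if y: "y \<in> ?R" "\<forall>y'\<in>?R. l (\<delta> c y) \<le> l (\<delta> c y')" for y
  proof -
    have yD: "y \<in> \<Delta>" using res_D[OF y(1)] .
    have "l (\<delta> c y) = l (\<delta> c z) + l (\<delta> z y)" using z(2) y(1) by blast
    moreover have "l (\<delta> c y) \<le> l (\<delta> c z)" using y(2) z(1) by blast
    ultimately have "l (\<delta> z y) = 0" by simp
    then have "\<delta> z y = \<one>" using l_zero dC[OF zD yD] by blast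
    then show "y = z" using d1[OF zD yD] by simp
  qed
  have zmin: "\<forall>y\<in>?R. l (\<delta> c z) \<le> l (\<delta> c y)" using z(2) by auto
  have gd: "gdist S \<Delta> \<delta> c y = l (\<delta> c y)" if "y \<in> ?R" for y
    using gdist_eq[OF c res_D[OF that]] .
  have pz: "proj S \<Delta> \<delta> ?R c = z"
    unfolding proj_def
  proof (rule the_equality)
    have "\<forall>za\<in>?R. gdist S \<Delta> \<delta> c z \<le> gdist S \<Delta> \<delta> c za"
    proof
      fix y' assume "y' \<in> ?R"
      then show "gdist S \<Delta> \<delta> c z \<le> gdist S \<Delta> \<delta> c y'" using zmin gd[OF z(1)] gd[of y'] by simp
    qed
    then show "z \<in> ?R \<and> (\<forall>za\<in>?R. gdist S \<Delta> \<delta> c z \<le> gdist S \<Delta> \<delta> c za)" using z(1) by blast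
  next
    fix y assume h: "y \<in> ?R \<and> (\<forall>za\<in>?R. gdist S \<Delta> \<delta> c y \<le> gdist S \<Delta> \<delta> c za)"
    have "\<forall>y'\<in>?R. l (\<delta> c y) \<le> l (\<delta> c y')"
    proof
      fix y' assume y': "y' \<in> ?R"
      then have "gdist S \<Delta> \<delta> c y \<le> gdist S \<Delta> \<delta> c y'" using h by blast
      then show "l (\<delta> c y) \<le> l (\<delta> c y')" using gd[of y] gd[OF y'] h by simp
    qed
    then show "y = z" using uniq h by blast
  qed
  show ?thesis
  proof (intro conjI)
    show "proj S \<Delta> \<delta> ?R c \<in> ?R" unfolding pz by (rule z(1))
    show "\<forall>y\<in>?R. \<delta> c y = \<delta> c (proj S \<Delta> \<delta> ?R c) \<otimes> \<delta> (proj S \<Delta> \<delta> ?R c) y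
        \<and> l (\<delta> c y) = l (\<delta> c (proj S \<Delta> \<delta> ?R c)) + l (\<delta> (proj S \<Delta> \<delta> ?R c) y)"
      unfolding pz by (rule z(2))
    show "\<forall>za\<in>?R. (\<forall>y\<in>?R. l (\<delta> c za) \<le> l (\<delta> c y)) \<longrightarrow> proj S \<Delta> \<delta> ?R c = za"
      unfolding pz using uniq by (metis)
  qed
qed

abbreviation "DD P Q \<equiv> {\<delta> x y |x y. x \<in> P \<and> y \<in> Q}"

lemma DD_facts: assumes J: "J \<subseteq> S" and K: "K \<subseteq> S" and a: "a \<in> \<Delta>" and b: "b \<in> \<Delta>"
  shows "\<And>d v. d \<in> DD (res J a) (res K b) \<Longrightarrow> v \<in> generate W J \<Longrightarrow> v \<otimes> d \<in> DD (res J a) (res K b)"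
    and "\<And>d u. d \<in> DD (res J a) (res K b) \<Longrightarrow> u \<in> generate W K \<Longrightarrow> d \<otimes> u \<in> DD (res J a) (res K b)"
    and "\<And>x x' y y'. x \<in> res J a \<Longrightarrow> x' \<in> res J a \<Longrightarrow> y \<in> res K b \<Longrightarrow> y' \<in> res K b \<Longrightarrow>
          \<exists>v\<in>generate W J. \<exists>u\<in>generate W K. \<delta> x' y' = v \<otimes> \<delta> x y \<otimes> u"
    and "DD (res J a) (res K b) \<subseteq> carrier W"
proof -
  fix d v assume d: "d \<in> DD (res J a) (res K b)" and v: "v \<in> generate W J"
  then obtain x y where xy: "x \<in> res J a" "y \<in> res K b" "d = \<delta> x y" by blast
  have xD: "x \<in> \<Delta>" "y \<in> \<Delta>" using xy res_D by auto
  obtain x' where x': "x' \<in> res J x" "\<delta> x' y = v \<otimes> \<delta> x y" using res_left[OF J xD v] by blast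
  have xa: "x' \<in> res J a" using x'(1) res_recenter[OF J a xy(1)] by simp
  have "v \<otimes> d = \<delta> x' y" using x'(2) xy(3) by simp
  then show "v \<otimes> d \<in> DD (res J a) (res K b)" using xa xy(2) by blast
next
  fix d u assume d: "d \<in> DD (res J a) (res K b)" and u: "u \<in> generate W K"
  then obtain x y where xy: "x \<in> res J a" "y \<in> res K b" "d = \<delta> x y" by blast
  have xD: "x \<in> \<Delta>" "y \<in> \<Delta>" using xy res_D by auto
  obtain y' where y': "y' \<in> res K y" "\<delta> x y' = \<delta> x y \<otimes> u" using res_right[OF K xD u] by blast
  have yb: "y' \<in> res K b" using y'(1) res_recenter[OF K b xy(2)] by simp
  have "d \<otimes> u = \<delta> x y'" using y'(2) xy(3) by simp
  then show "d \<otimes> u \<in> DD (res J a) (res K b)" using yb xy(1) by blast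
next
  fix x x' y y' assume h: "x \<in> res J a" "x' \<in> res J a" "y \<in> res K b" "y' \<in> res K b"
  have D: "x \<in> \<Delta>" "x' \<in> \<Delta>" "y \<in> \<Delta>" "y' \<in> \<Delta>" using h res_D by auto
  have gy: "\<delta> y y' \<in> generate W K" using h(4) res_recenter[OF K b h(3)] res_iff by blast
  have gx: "\<delta> x x' \<in> generate W J" using h(2) res_recenter[OF J a h(1)] res_iff by blast
  obtain u where u: "u \<in> generate W K" "\<delta> x' y' = \<delta> x' y \<otimes> u" using RES[OF K D(2) D(4) D(3) gy] by blast
  obtain u2 where u2: "u2 \<in> generate W J" "\<delta> y x' = \<delta> y x \<otimes> u2" using RES[OF J D(3) D(2) D(1) gx] by blast
  have u2c: "u2 \<in> carrier W" using gen_c[OF J u2(1)] .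
  have "\<delta> x' y = inv (\<delta> y x \<otimes> u2)" using d_inv[OF D(3) D(2)] u2(2) by simp
  also have "\<dots> = inv u2 \<otimes> inv (\<delta> y x)" using u2c dC[OF D(3) D(1)] by (simp add: inv_mult_group)
  also have "\<dots> = inv u2 \<otimes> \<delta> x y" using d_inv[OF D(1) D(3)] dC[OF D(1) D(3)] by simp
  finally have "\<delta> x' y' = inv u2 \<otimes> \<delta> x y \<otimes> u" using u(2) by simp
  then show "\<exists>v\<in>generate W J. \<exists>u\<in>generate W K. \<delta> x' y' = v \<otimes> \<delta> x y \<otimes> u"
    using u(1) gen_inv[OF J u2(1)] by blast
next
  show "DD (res J a) (res K b) \<subseteq> carrier W" using dC res_D by blast
qed

lemma md_char: assumes J: "J \<subseteq> S" and K: "K \<subseteq> S" and a: "a \<in> \<Delta>" and b: "b \<in> \<Delta>"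
  shows "min_delta W S \<delta> (res J a) (res K b) \<in> DD (res J a) (res K b)"
    and "\<And>w. w \<in> DD (res J a) (res K b) \<Longrightarrow> (\<forall>v\<in>generate W J. l w \<le> l (v \<otimes> w)) \<Longrightarrow>
            (\<forall>u\<in>generate W K. l w \<le> l (w \<otimes> u)) \<Longrightarrow> w = min_delta W S \<delta> (res J a) (res K b)"
proof -
  let ?D = "DD (res J a) (res K b)"
  note F = DD_facts[OF J K a b]
  let ?P = "\<lambda>n. \<exists>w\<in>?D. l w = n"
  have p: "?P (l (\<delta> a b))" using res_self[OF a] res_self[OF b] by blast
  obtain w0 where w0: "w0 \<in> ?D" "l w0 = (LEAST n. ?P n)" using LeastI[of ?P, OF p] by blast
  have w0min: "l w0 \<le> l w" if "w \<in> ?D" for w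
    using Least_le[of ?P "l w"] that w0(2) by auto
  have w0c: "w0 \<in> carrier W" using w0(1) F(4) by blast
  have redL: "\<forall>v\<in>generate W J. l w0 \<le> l (v \<otimes> w0)" using w0min F(1)[OF w0(1)] by blast
  have redR: "\<forall>u\<in>generate W K. l w0 \<le> l (w0 \<otimes> u)" using w0min F(2)[OF w0(1)] by blast
  have uniq: "w = w0" if w: "w \<in> ?D" "\<forall>v\<in>generate W J. l w \<le> l (v \<otimes> w)" "\<forall>u\<in>generate W K. l w \<le> l (w \<otimes> u)" for w
  proof -
    obtain x y where xy: "x \<in> res J a" "y \<in> res K b" "w0 = \<delta> x y" using w0(1) by blast
    obtain x' y' where xy': "x' \<in> res J a" "y' \<in> res K b" "w = \<delta> x' y'" using w(1) by blast
    obtain v u where vu: "v \<in> generate W J" "u \<in> generate W K" "w = v \<otimes> w0 \<otimes> u"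
      using F(3)[OF xy(1) xy'(1) xy(2) xy'(2)] xy(3) xy'(3) by blast
    have wc: "w \<in> carrier W" using w(1) F(4) by blast
    show ?thesis using dc[OF J K w0c wc redL redR w(2) w(3) vu] .
  qed
  have md: "min_delta W S \<delta> (res J a) (res K b) = w0"
    unfolding min_delta_def
  proof (rule the_equality)
    show "w0 \<in> ?D \<and> (\<forall>v\<in>?D. l w0 \<le> l v)" using w0(1) w0min by blast
  next
    fix w assume h: "w \<in> ?D \<and> (\<forall>v\<in>?D. l w \<le> l v)"
    have "\<forall>v\<in>generate W J. l w \<le> l (v \<otimes> w)" using h F(1) by blast
    moreover have "\<forall>u\<in>generate W K. l w \<le> l (w \<otimes> u)" using h F(2) by blast
    ultimately show "w = w0" using uniq h by blast
  qed
  show "min_delta W S \<delta> (res J a) (res K b) \<in> ?D" using md w0(1) by simp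
  show "\<And>w. w \<in> ?D \<Longrightarrow> (\<forall>v\<in>generate W J. l w \<le> l (v \<otimes> w)) \<Longrightarrow>
            (\<forall>u\<in>generate W K. l w \<le> l (w \<otimes> u)) \<Longrightarrow> w = min_delta W S \<delta> (res J a) (res K b)"
    using uniq md by simp
qed

lemma P3: assumes J: "J \<subseteq> S" and K: "K \<subseteq> S" and a0: "a0 \<in> \<Delta>" and b0: "b0 \<in> \<Delta>" and b: "b \<in> res K b0"
  shows "\<delta> (proj S \<Delta> \<delta> (res J a0) b) (proj S \<Delta> \<delta> (res K b0) (proj S \<Delta> \<delta> (res J a0) b))
           = min_delta W S \<delta> (res J a0) (res K b0)"
proof -
  define x where "x = proj S \<Delta> \<delta> (res J a0) b"
  define y where "y = proj S \<Delta> \<delta> (res K b0) x"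
  have bD: "b \<in> \<Delta>" using res_D[OF b] .
  note pA = proj_char[OF J bD a0, folded x_def]
  have xA: "x \<in> res J a0" using pA by blast
  have xD: "x \<in> \<Delta>" using res_D[OF xA] .
  note pB = proj_char[OF K xD b0, folded y_def]
  have yB: "y \<in> res K b0" using pB by blast
  have yD: "y \<in> \<Delta>" using res_D[OF yB] .
  have pB2: "\<And>z. z \<in> res K b0 \<Longrightarrow> \<delta> x z = \<delta> x y \<otimes> \<delta> y z \<and> l (\<delta> x z) = l (\<delta> x y) + l (\<delta> y z)"
    using pB by blast
  have pA2: "\<And>z. z \<in> res J a0 \<Longrightarrow> \<delta> b z = \<delta> b x \<otimes> \<delta> x z \<and> l (\<delta> b z) = l (\<delta> b x) + l (\<delta> x z)"
    using pA by blast
  have inD: "\<delta> x y \<in> DD (res J a0) (res K b0)" using xA yB by blast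
  have mc: "\<delta> x y \<in> carrier W" using dC[OF xD yD] .
  have R: "\<forall>u\<in>generate W K. l (\<delta> x y) \<le> l (\<delta> x y \<otimes> u)"
  proof
    fix u assume u: "u \<in> generate W K"
    obtain y' where y': "y' \<in> res K y" "\<delta> x y' = \<delta> x y \<otimes> u" using res_right[OF K xD yD u] by blast
    have "y' \<in> res K b0" using y'(1) res_recenter[OF K b0 yB] by simp
    then have "l (\<delta> x y') = l (\<delta> x y) + l (\<delta> y y')" using pB2 by blast
    then show "l (\<delta> x y) \<le> l (\<delta> x y \<otimes> u)" using y'(2) by simp
  qed
  have L: "\<forall>v\<in>generate W J. l (\<delta> x y) \<le> l (v \<otimes> \<delta> x y)"
  proof
    fix v assume v: "v \<in> generate W J"
    have vc: "v \<in> carrier W" using gen_c[OF J v] .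
    have pc: "\<delta> y b \<in> carrier W" using dC[OF yD bD] .
    have e1: "\<delta> x b = \<delta> x y \<otimes> \<delta> y b" and l1: "l (\<delta> x b) = l (\<delta> x y) + l (\<delta> y b)" using pB2[OF b] by auto
    obtain a' where a': "a' \<in> res J x" "\<delta> b a' = \<delta> b x \<otimes> inv v" using res_right[OF J bD xD gen_inv[OF J v]] by blast
    have "a' \<in> res J a0" using a'(1) res_recenter[OF J a0 xA] by simp
    then have l2: "l (\<delta> b x) \<le> l (\<delta> b x \<otimes> inv v)" using pA2 a'(2) by fastforce
    have xbc: "\<delta> x b \<in> carrier W" using dC[OF xD bD] .
    have "\<delta> b x \<otimes> inv v = inv (v \<otimes> \<delta> x b)" using d_inv[OF xD bD] xbc vc by (simp add: inv_mult_group)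
    then have l3: "l (\<delta> b x \<otimes> inv v) = l (v \<otimes> \<delta> x b)" using l_inv[of "v \<otimes> \<delta> x b"] xbc vc by simp
    have l4: "l (\<delta> b x) = l (\<delta> x b)" using d_inv[OF xD bD] l_inv[OF xbc] by simp
    have "v \<otimes> \<delta> x b = (v \<otimes> \<delta> x y) \<otimes> \<delta> y b" using e1 vc mc pc by (simp add: m_assoc)
    then have l5: "l (v \<otimes> \<delta> x b) \<le> l (v \<otimes> \<delta> x y) + l (\<delta> y b)" using l_mult[of "v \<otimes> \<delta> x y" "\<delta> y b"] vc mc pc by simp
    show "l (\<delta> x y) \<le> l (v \<otimes> \<delta> x y)" using l1 l2 l3 l4 l5 by linarith
  qed
  have "\<delta> x y = min_delta W S \<delta> (res J a0) (res K b0)" using md_char(2)[OF J K a0 b0 inD L R] .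
  then show ?thesis unfolding x_def y_def .
qed

end

locale bact = bld W S \<Delta> \<delta> for W :: "('w, 'm) monoid_scheme" (structure) and S and \<Delta> :: "'c set" and \<delta> +
  fixes G :: "('g, 'n) monoid_scheme" and \<phi> :: "'g \<Rightarrow> 'c \<Rightarrow> 'c"
  assumes ga: "group_action G \<Delta> \<phi>" and tp: "type_preserving G \<Delta> \<delta> \<phi>" and wt: "weyl_transitive G \<Delta> \<delta> \<phi>"
begin

lemma gD: "g \<in> carrier G \<Longrightarrow> x \<in> \<Delta> \<Longrightarrow> \<phi> g x \<in> \<Delta>"
  using group_action.element_image[OF ga] by blast
lemma gsurj: "g \<in> carrier G \<Longrightarrow> \<phi> g ` \<Delta> = \<Delta>"
  using group_action.surj_prop[OF ga] by blast
lemma gd: "g \<in> carrier G \<Longrightarrow> x \<in> \<Delta> \<Longrightarrow> y \<in> \<Delta> \<Longrightarrow> \<delta> (\<phi> g x) (\<phi> g y) = \<delta> x y"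
  using tp unfolding type_preserving_def by blast
lemma wtr: "x \<in> \<Delta> \<Longrightarrow> y \<in> \<Delta> \<Longrightarrow> x' \<in> \<Delta> \<Longrightarrow> y' \<in> \<Delta> \<Longrightarrow> \<delta> x y = \<delta> x' y' \<Longrightarrow>
    \<exists>g\<in>carrier G. \<phi> g x = x' \<and> \<phi> g y = y'"
  using wt unfolding weyl_transitive_def by blast

lemma img_res: assumes g: "g \<in> carrier G" and x: "x \<in> \<Delta>" shows "\<phi> g ` res J x = res J (\<phi> g x)"
proof
  show "\<phi> g ` res J x \<subseteq> res J (\<phi> g x)"
  proof
    fix y' assume "y' \<in> \<phi> g ` res J x"
    then obtain y where y: "y \<in> res J x" "y' = \<phi> g y" by blast
    have yD: "y \<in> \<Delta>" using res_D[OF y(1)] .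
    have "\<delta> (\<phi> g x) y' = \<delta> x y" using gd[OF g x yD] y(2) by simp
    then show "y' \<in> res J (\<phi> g x)" using y yD gD[OF g yD] res_iff by auto
  qed
next
  show "res J (\<phi> g x) \<subseteq> \<phi> g ` res J x"
  proof
    fix y' assume y': "y' \<in> res J (\<phi> g x)"
    then have "y' \<in> \<Delta>" by (rule res_D)
    then obtain y where y: "y \<in> \<Delta>" "y' = \<phi> g y" using gsurj[OF g] by blast
    have "\<delta> x y = \<delta> (\<phi> g x) y'" using gd[OF g x y(1)] y(2) by simp
    then have "y \<in> res J x" using y' y res_iff by auto
    then show "y' \<in> \<phi> g ` res J x" using y(2) by blast
  qed
qed

lemma stab_move: assumes J: "J \<subseteq> S" and x0: "x0 \<in> \<Delta>" and x: "x \<in> res J x0" and g: "g \<in> carrier G"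
  and gx: "\<phi> g x \<in> res J x0"
  shows "g \<in> simplex_stab G \<phi> (res J x0)"
proof -
  have xD: "x \<in> \<Delta>" using res_D[OF x] .
  have "\<phi> g ` res J x0 = \<phi> g ` res J x" using res_recenter[OF J x0 x] by simp
  also have "\<dots> = res J (\<phi> g x)" using img_res[OF g xD] .
  also have "\<dots> = res J x0" using res_recenter[OF J x0 gx] .
  finally show ?thesis unfolding simplex_stab_def using g by blast
qed

lemma proj_eq: assumes J: "J \<subseteq> S" and x0: "x0 \<in> \<Delta>" and c: "c \<in> \<Delta>" and g: "g \<in> simplex_stab G \<phi> (res J x0)"
  shows "\<phi> g (proj S \<Delta> \<delta> (res J x0) c) = proj S \<Delta> \<delta> (res J x0) (\<phi> g c)"
proof -
  let ?A = "res J x0"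
  define p where "p = proj S \<Delta> \<delta> ?A c"
  have gc: "g \<in> carrier G" and gA: "\<phi> g ` ?A = ?A" using g unfolding simplex_stab_def by auto
  note pc = proj_char[OF J c x0, folded p_def]
  have pA: "p \<in> ?A" using pc by blast
  have pD: "p \<in> \<Delta>" using res_D[OF pA] .
  have gcD: "\<phi> g c \<in> \<Delta>" using gD[OF gc c] .
  note pc' = proj_char[OF J gcD x0]
  have gpA: "\<phi> g p \<in> ?A" using gA pA by blast
  have "\<forall>y\<in>?A. l (\<delta> (\<phi> g c) (\<phi> g p)) \<le> l (\<delta> (\<phi> g c) y)"
  proof
    fix y assume "y \<in> ?A"
    then obtain y0 where y0: "y0 \<in> ?A" "y = \<phi> g y0" using gA by blast
    have y0D: "y0 \<in> \<Delta>" using res_D[OF y0(1)] .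
    have "l (\<delta> c y0) = l (\<delta> c p) + l (\<delta> p y0)" using pc y0(1) by blast
    then show "l (\<delta> (\<phi> g c) (\<phi> g p)) \<le> l (\<delta> (\<phi> g c) y)"
      using y0(2) gd[OF gc c y0D] gd[OF gc c pD] by simp
  qed
  then have "proj S \<Delta> \<delta> ?A (\<phi> g c) = \<phi> g p"
    using mp[OF bspec[OF conjunct2[OF conjunct2[OF pc']] gpA]] by blast
  then show ?thesis unfolding p_def by simp
qed

lemma DD_img: assumes g: "g \<in> carrier G" and P: "P \<subseteq> \<Delta>" and Q: "Q \<subseteq> \<Delta>"
  shows "DD (\<phi> g ` P) (\<phi> g ` Q) = DD P Q"
proof
  show "DD (\<phi> g ` P) (\<phi> g ` Q) \<subseteq> DD P Q"
  proof
    fix d assume "d \<in> DD (\<phi> g ` P) (\<phi> g ` Q)"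
    then obtain x y where xy: "x \<in> P" "y \<in> Q" "d = \<delta> (\<phi> g x) (\<phi> g y)" by blast
    have "x \<in> \<Delta>" "y \<in> \<Delta>" using xy P Q by auto
    then have "d = \<delta> x y" using gd[OF g] xy(3) by simp
    then show "d \<in> DD P Q" using xy by blast
  qed
next
  show "DD P Q \<subseteq> DD (\<phi> g ` P) (\<phi> g ` Q)"
  proof
    fix d assume "d \<in> DD P Q"
    then obtain x y where xy: "x \<in> P" "y \<in> Q" "d = \<delta> x y" by blast
    have "x \<in> \<Delta>" "y \<in> \<Delta>" using xy P Q by auto
    then have "d = \<delta> (\<phi> g x) (\<phi> g y)" using gd[OF g] xy(3) by simp
    then show "d \<in> DD (\<phi> g ` P) (\<phi> g ` Q)" using xy by blast
  qed
qed

lemma proj_in: assumes J: "J \<subseteq> S" and x0: "x0 \<in> \<Delta>" and c: "c \<in> \<Delta>"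
  shows "proj S \<Delta> \<delta> (res J x0) c \<in> res J x0"
  using proj_char[OF J c x0] by blast

lemma trans_proj: assumes J: "J \<subseteq> S" and K: "K \<subseteq> S" and a0: "a0 \<in> \<Delta>" and b0: "b0 \<in> \<Delta>"
  shows "acts_transitively_on (simplex_stab G \<phi> (res J a0) \<inter> simplex_stab G \<phi> (res K b0)) \<phi>
           (proj_set S \<Delta> \<delta> (res J a0) (res K b0))"
  unfolding acts_transitively_on_def
proof (intro conjI ballI)
  fix h x assume h: "h \<in> simplex_stab G \<phi> (res J a0) \<inter> simplex_stab G \<phi> (res K b0)"
    and x: "x \<in> proj_set S \<Delta> \<delta> (res J a0) (res K b0)"
  obtain b where b: "b \<in> res K b0" "x = proj S \<Delta> \<delta> (res J a0) b" using x unfolding proj_set_def by blast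
  have bD: "b \<in> \<Delta>" using res_D[OF b(1)] .
  have hA: "h \<in> simplex_stab G \<phi> (res J a0)" and hB: "h \<in> simplex_stab G \<phi> (res K b0)" using h by auto
  have "\<phi> h x = proj S \<Delta> \<delta> (res J a0) (\<phi> h b)" using proj_eq[OF J a0 bD hA] b(2) by simp
  moreover have "\<phi> h b \<in> res K b0" using hB b(1) unfolding simplex_stab_def by blast
  ultimately show "\<phi> h x \<in> proj_set S \<Delta> \<delta> (res J a0) (res K b0)" unfolding proj_set_def by blast
next
  fix x1 x2 assume x1: "x1 \<in> proj_set S \<Delta> \<delta> (res J a0) (res K b0)"
    and x2: "x2 \<in> proj_set S \<Delta> \<delta> (res J a0) (res K b0)"
  obtain b1 where b1: "b1 \<in> res K b0" "x1 = proj S \<Delta> \<delta> (res J a0) b1" using x1 unfolding proj_set_def by blast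
  obtain b2 where b2: "b2 \<in> res K b0" "x2 = proj S \<Delta> \<delta> (res J a0) b2" using x2 unfolding proj_set_def by blast
  have bD: "b1 \<in> \<Delta>" "b2 \<in> \<Delta>" using res_D b1(1) b2(1) by auto
  have xA: "x1 \<in> res J a0" "x2 \<in> res J a0" using proj_in[OF J a0] bD b1(2) b2(2) by auto
  have xD: "x1 \<in> \<Delta>" "x2 \<in> \<Delta>" using res_D xA by auto
  define y1 where "y1 = proj S \<Delta> \<delta> (res K b0) x1"
  define y2 where "y2 = proj S \<Delta> \<delta> (res K b0) x2"
  have yB: "y1 \<in> res K b0" "y2 \<in> res K b0" using proj_in[OF K b0] xD y1_def y2_def by auto
  have yD: "y1 \<in> \<Delta>" "y2 \<in> \<Delta>" using res_D yB by auto
  have "\<delta> x1 y1 = min_delta W S \<delta> (res J a0) (res K b0)" using P3[OF J K a0 b0 b1(1)] b1(2) y1_def by simp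
  moreover have "\<delta> x2 y2 = min_delta W S \<delta> (res J a0) (res K b0)" using P3[OF J K a0 b0 b2(1)] b2(2) y2_def by simp
  ultimately obtain g where g: "g \<in> carrier G" "\<phi> g x1 = x2" "\<phi> g y1 = y2" using wtr[OF xD(1) yD(1) xD(2) yD(2)] by metis
  have "g \<in> simplex_stab G \<phi> (res J a0)" using stab_move[OF J a0 xA(1) g(1)] g(2) xA(2) by simp
  moreover have "g \<in> simplex_stab G \<phi> (res K b0)" using stab_move[OF K b0 yB(1) g(1)] g(3) yB(2) by simp
  ultimately show "\<exists>h\<in>simplex_stab G \<phi> (res J a0) \<inter> simplex_stab G \<phi> (res K b0). \<phi> h x1 = x2" using g(2) by blast
qed

lemma pset_in: assumes J: "J \<subseteq> S" and a0: "a0 \<in> \<Delta>" and K: "K \<subseteq> S" and b0: "b0 \<in> \<Delta>"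
  and x: "x \<in> proj_set S \<Delta> \<delta> (res J a0) (res K b0)" shows "x \<in> res J a0"
proof -
  obtain b where b: "b \<in> res K b0" "x = proj S \<Delta> \<delta> (res J a0) b" using x unfolding proj_set_def by blast
  show ?thesis using proj_in[OF J a0 res_D[OF b(1)]] b(2) by simp
qed

lemma trans_pairs: assumes J: "J \<subseteq> S" and K: "K \<subseteq> S" and a0: "a0 \<in> \<Delta>" and b0: "b0 \<in> \<Delta>"
  shows "acts_transitively_on (simplex_stab G \<phi> (res J a0) \<inter> simplex_stab G \<phi> (res K b0)) (\<lambda>g (x, y). (\<phi> g x, \<phi> g y))
           {(x, y). x \<in> proj_set S \<Delta> \<delta> (res J a0) (res K b0) \<and> y \<in> proj_set S \<Delta> \<delta> (res K b0) (res J a0)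
                    \<and> \<delta> x y = min_delta W S \<delta> (res J a0) (res K b0)}"
  unfolding acts_transitively_on_def
proof (intro conjI ballI)
  let ?X = "{(x, y). x \<in> proj_set S \<Delta> \<delta> (res J a0) (res K b0) \<and> y \<in> proj_set S \<Delta> \<delta> (res K b0) (res J a0)
                    \<and> \<delta> x y = min_delta W S \<delta> (res J a0) (res K b0)}"
  fix h u assume h: "h \<in> simplex_stab G \<phi> (res J a0) \<inter> simplex_stab G \<phi> (res K b0)" and u: "u \<in> ?X"
  obtain x y where xy: "u = (x, y)" by (cases u) auto
  have x: "x \<in> proj_set S \<Delta> \<delta> (res J a0) (res K b0)" and y: "y \<in> proj_set S \<Delta> \<delta> (res K b0) (res J a0)"
    and d: "\<delta> x y = min_delta W S \<delta> (res J a0) (res K b0)" using u xy by auto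
  have h': "h \<in> simplex_stab G \<phi> (res K b0) \<inter> simplex_stab G \<phi> (res J a0)" using h by blast
  have hc: "h \<in> carrier G" using h unfolding simplex_stab_def by blast
  have "\<phi> h x \<in> proj_set S \<Delta> \<delta> (res J a0) (res K b0)" using trans_proj[OF J K a0 b0] h x
    unfolding acts_transitively_on_def by blast
  moreover have "\<phi> h y \<in> proj_set S \<Delta> \<delta> (res K b0) (res J a0)" using trans_proj[OF K J b0 a0] h' y
    unfolding acts_transitively_on_def by blast
  moreover have "\<delta> (\<phi> h x) (\<phi> h y) = \<delta> x y"
    using gd[OF hc res_D[OF pset_in[OF J a0 K b0 x]] res_D[OF pset_in[OF K b0 J a0 y]]] .
  ultimately show "(\<lambda>g (x, y). (\<phi> g x, \<phi> g y)) h u \<in> ?X" using xy d by simp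
next
  let ?X = "{(x, y). x \<in> proj_set S \<Delta> \<delta> (res J a0) (res K b0) \<and> y \<in> proj_set S \<Delta> \<delta> (res K b0) (res J a0)
                    \<and> \<delta> x y = min_delta W S \<delta> (res J a0) (res K b0)}"
  fix u v assume u: "u \<in> ?X" and v: "v \<in> ?X"
  obtain x1 y1 where u1: "u = (x1, y1)" by (cases u) auto
  obtain x2 y2 where v1: "v = (x2, y2)" by (cases v) auto
  have x1: "x1 \<in> res J a0" using pset_in[OF J a0 K b0] u u1 by auto
  have x2: "x2 \<in> res J a0" using pset_in[OF J a0 K b0] v v1 by auto
  have y1: "y1 \<in> res K b0" using pset_in[OF K b0 J a0] u u1 by auto
  have y2: "y2 \<in> res K b0" using pset_in[OF K b0 J a0] v v1 by auto
  have e: "\<delta> x1 y1 = \<delta> x2 y2" using u v u1 v1 by auto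
  obtain g where g: "g \<in> carrier G" "\<phi> g x1 = x2" "\<phi> g y1 = y2"
    using wtr[OF res_D[OF x1] res_D[OF y1] res_D[OF x2] res_D[OF y2] e] by blast
  have "g \<in> simplex_stab G \<phi> (res J a0)" using stab_move[OF J a0 x1 g(1)] g(2) x2 by simp
  moreover have "g \<in> simplex_stab G \<phi> (res K b0)" using stab_move[OF K b0 y1 g(1)] g(3) y2 by simp
  ultimately show "\<exists>h\<in>simplex_stab G \<phi> (res J a0) \<inter> simplex_stab G \<phi> (res K b0). (\<lambda>g (x, y). (\<phi> g x, \<phi> g y)) h u = v"
    using g u1 v1 by auto
qed

lemma trans_res: assumes J: "J \<subseteq> S" and K: "K \<subseteq> S" and a0: "a0 \<in> \<Delta>" and b0: "b0 \<in> \<Delta>"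
  shows "acts_transitively_on (simplex_stab G \<phi> (res K b0)) (\<lambda>g R. \<phi> g ` R)
           {R. simplex_of_type W S \<Delta> \<delta> J R \<and> min_delta W S \<delta> (res K b0) R = min_delta W S \<delta> (res K b0) (res J a0)}"
  unfolding acts_transitively_on_def
proof (intro conjI ballI)
  let ?B = "res K b0"
  let ?X = "{R. simplex_of_type W S \<Delta> \<delta> J R \<and> min_delta W S \<delta> ?B R = min_delta W S \<delta> ?B (res J a0)}"
  fix h R assume h: "h \<in> simplex_stab G \<phi> ?B" and R: "R \<in> ?X"
  have hc: "h \<in> carrier G" and hB: "\<phi> h ` ?B = ?B" using h unfolding simplex_stab_def by auto
  have st: "simplex_of_type W S \<Delta> \<delta> J R" and md: "min_delta W S \<delta> ?B R = min_delta W S \<delta> ?B (res J a0)" using R by auto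
  obtain x where x: "x \<in> \<Delta>" "R = res J x" and fin: "finite (generate W J)" using st unfolding simplex_of_type_def by blast
  have "\<phi> h ` R = res J (\<phi> h x)" using img_res[OF hc x(1)] x(2) by simp
  then have st': "simplex_of_type W S \<Delta> \<delta> J (\<phi> h ` R)" unfolding simplex_of_type_def using J fin gD[OF hc x(1)] by blast
  have RD: "R \<subseteq> \<Delta>" "?B \<subseteq> \<Delta>" using x(2) res_D by auto
  have "DD ?B (\<phi> h ` R) = DD ?B R" using DD_img[OF hc RD(2) RD(1)] hB by simp
  then have "min_delta W S \<delta> ?B (\<phi> h ` R) = min_delta W S \<delta> ?B R" unfolding min_delta_def by simp
  then show "\<phi> h ` R \<in> ?X" using st' md by simp
next
  let ?B = "res K b0"
  let ?X = "{R. simplex_of_type W S \<Delta> \<delta> J R \<and> min_delta W S \<delta> ?B R = min_delta W S \<delta> ?B (res J a0)}"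
  fix R1 R2 assume R1: "R1 \<in> ?X" and R2: "R2 \<in> ?X"
  obtain x1 where x1: "x1 \<in> \<Delta>" "R1 = res J x1" using R1 unfolding simplex_of_type_def by blast
  obtain x2 where x2: "x2 \<in> \<Delta>" "R2 = res J x2" using R2 unfolding simplex_of_type_def by blast
  have "min_delta W S \<delta> ?B R1 \<in> DD ?B R1" using md_char(1)[OF K J b0 x1(1)] x1(2) by simp
  then obtain b1 r1 where br1: "b1 \<in> ?B" "r1 \<in> R1" "\<delta> b1 r1 = min_delta W S \<delta> ?B (res J a0)" using R1 by auto
  have "min_delta W S \<delta> ?B R2 \<in> DD ?B R2" using md_char(1)[OF K J b0 x2(1)] x2(2) by simp
  then obtain b2 r2 where br2: "b2 \<in> ?B" "r2 \<in> R2" "\<delta> b2 r2 = min_delta W S \<delta> ?B (res J a0)" using R2 by auto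
  have D: "b1 \<in> \<Delta>" "r1 \<in> \<Delta>" "b2 \<in> \<Delta>" "r2 \<in> \<Delta>" using br1 br2 x1 x2 res_D by auto
  obtain g where g: "g \<in> carrier G" "\<phi> g b1 = b2" "\<phi> g r1 = r2" using wtr[OF D] br1(3) br2(3) by metis
  have gB: "g \<in> simplex_stab G \<phi> ?B" using stab_move[OF K b0 br1(1) g(1)] g(2) br2(1) by simp
  have "\<phi> g ` R1 = \<phi> g ` res J r1" using res_recenter[OF J x1(1)] br1(2) x1(2) by simp
  also have "\<dots> = res J r2" using img_res[OF g(1) D(2)] g(3) by simp
  also have "\<dots> = R2" using res_recenter[OF J x2(1)] br2(2) x2(2) by simp
  finally show "\<exists>h\<in>simplex_stab G \<phi> ?B. \<phi> h ` R1 = R2" using gB by blast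
qed

end

theorem lemma4p1:
  fixes W :: "('w, 'm) monoid_scheme" and S :: "'w set"
    and \<Delta> :: "'c set" and \<delta> :: "'c \<Rightarrow> 'c \<Rightarrow> 'w"
    and G :: "('g, 'n) monoid_scheme" and \<phi> :: "'g \<Rightarrow> 'c \<Rightarrow> 'c"
    and J K :: "'w set" and A B :: "'c set"
  assumes bld: "building W S \<Delta> \<delta>"
    and grp: "group G" and act: "group_action G \<Delta> \<phi>"
    and tp: "type_preserving G \<Delta> \<delta> \<phi>"
    and wt: "weyl_transitive G \<Delta> \<delta> \<phi>"
    and a: "simplex_of_type W S \<Delta> \<delta> J A"
    and b: "simplex_of_type W S \<Delta> \<delta> K B"
  shows "acts_transitively_on (simplex_stab G \<phi> B) (\<lambda>g R. \<phi> g ` R)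
           {R. simplex_of_type W S \<Delta> \<delta> J R \<and> min_delta W S \<delta> B R = min_delta W S \<delta> B A}
    \<and> acts_transitively_on (simplex_stab G \<phi> A \<inter> simplex_stab G \<phi> B) \<phi> (proj_set S \<Delta> \<delta> A B)
    \<and> acts_transitively_on (simplex_stab G \<phi> A \<inter> simplex_stab G \<phi> B) \<phi> (proj_set S \<Delta> \<delta> B A)
    \<and> acts_transitively_on (simplex_stab G \<phi> A \<inter> simplex_stab G \<phi> B) (\<lambda>g (x, y). (\<phi> g x, \<phi> g y))
           {(x, y). x \<in> proj_set S \<Delta> \<delta> A B \<and> y \<in> proj_set S \<Delta> \<delta> B A
                    \<and> \<delta> x y = min_delta W S \<delta> A B}"
proof -
  have cs: "coxeter_system W S" using bld unfolding building_def by (rule conjunct1)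
  have gW: "group W" using cs unfolding coxeter_system_def by (rule conjunct1)
  interpret bact W S \<Delta> \<delta> G \<phi>
    by (rule bact.intro[OF bld.intro[OF cox.intro[OF gW cox_axioms.intro[OF cs]] bld_axioms.intro[OF bld]]
          bact_axioms.intro[OF act tp wt]])
  obtain a0 where J: "J \<subseteq> S" and a0: "a0 \<in> \<Delta>" and A: "A = residue W \<Delta> \<delta> J a0"
    using a unfolding simplex_of_type_def by blast
  obtain b0 where K: "K \<subseteq> S" and b0: "b0 \<in> \<Delta>" and B: "B = residue W \<Delta> \<delta> K b0"
    using b unfolding simplex_of_type_def by blast
  have 1: "acts_transitively_on (simplex_stab G \<phi> B) (\<lambda>g R. \<phi> g ` R)
           {R. simplex_of_type W S \<Delta> \<delta> J R \<and> min_delta W S \<delta> B R = min_delta W S \<delta> B A}"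
    using trans_res[OF J K a0 b0] A B by simp
  have 2: "acts_transitively_on (simplex_stab G \<phi> A \<inter> simplex_stab G \<phi> B) \<phi> (proj_set S \<Delta> \<delta> A B)"
    using trans_proj[OF J K a0 b0] A B by simp
  have 3: "acts_transitively_on (simplex_stab G \<phi> A \<inter> simplex_stab G \<phi> B) \<phi> (proj_set S \<Delta> \<delta> B A)"
    using trans_proj[OF K J b0 a0] A B by (simp add: Int_commute)
  have 4: "acts_transitively_on (simplex_stab G \<phi> A \<inter> simplex_stab G \<phi> B) (\<lambda>g (x, y). (\<phi> g x, \<phi> g y))
           {(x, y). x \<in> proj_set S \<Delta> \<delta> A B \<and> y \<in> proj_set S \<Delta> \<delta> B A
                    \<and> \<delta> x y = min_delta W S \<delta> A B}"
    using trans_pairs[OF J K a0 b0] A B by simp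
  show ?thesis using 1 2 3 4 by blast
qed

end
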